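(* Let $\mathbf{X}=(X_n)_{n\ge0}$ be a real-valued second-order stationary process with covariance sequence $\sigma_X(h)$, let $(T_n)_{n\ge0}$ be a random walk independent of $\mathbf{X}$ with $T_0=0$ and i.i.d. increments $\Delta_j=T_j-T_{j-1}$ taking values in $\{1,2,\dots\}$ with common law $S$, and let $Y_n=X_{T_n}$, with covariance $\sigma_Y$. (i) Let $p\ge 1$. If $\sum_{h}|\sigma_X(h)|^p<\infty$, then $\sum_h|\sigma_Y(h)|^p<\infty$. (ii) If $p\in[1,2]$ and $\sum_h|\sigma_X(h)|^p<\infty$, then both $\mathbf{X}$ and $\mathbf{Y}$ have spectral densities $f_X,f_Y$, and $$f_Y(\lambda)=\frac{1}{2\pi}\sum_{j=-\infty}^{+\infty} e^{-ij\lambda}\int_{-\pi}^{\pi}\hat S(\theta)^{|j|}f_X(\theta)\,d\theta,$$ where $\hat S(\theta)=\mathbb{E}(e^{i\theta T_1})=\sum_{j\ge1}S(j)e^{ij\theta}$ and the series converges in $L^2([-\pi,\pi])$.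
   Context: Spectral densities are normalized so that $\sigma_X(h)=\int_{-\pi}^{\pi}e^{ih\lambda}f_X(\lambda)\,d\lambda$ (and likewise for $\mathbf{Y}$). The covariance of the sampled process satisfies $\sigma_Y(0)=\sigma_X(0)$ and $\sigma_Y(h)=\mathbb{E}(\sigma_X(T_h))$ for $h\ge1$. *)

theory Defs
  imports "HOL-Probability.Probability"
begin

definition second_order_stationary :: "'a measure \<Rightarrow> (nat \<Rightarrow> 'a \<Rightarrow> real) \<Rightarrow> bool" where
  "second_order_stationary M X \<longleftrightarrow>
     prob_space M \<and>
     (\<forall>n. X n \<in> borel_measurable M \<and> integrable M (\<lambda>\<omega>. (X n \<omega>)\<^sup>2)) \<and>
     (\<forall>n. integral\<^sup>L M (X n) = integral\<^sup>L M (X 0)) \<and>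
     (\<forall>m h. integral\<^sup>L M (\<lambda>\<omega>. (X m \<omega> - integral\<^sup>L M (X m)) * (X (m + h) \<omega> - integral\<^sup>L M (X (m + h))))
          = integral\<^sup>L M (\<lambda>\<omega>. (X 0 \<omega> - integral\<^sup>L M (X 0)) * (X h \<omega> - integral\<^sup>L M (X h))))"

definition autocov :: "'a measure \<Rightarrow> (nat \<Rightarrow> 'a \<Rightarrow> real) \<Rightarrow> int \<Rightarrow> real" where
  "autocov M X h =
     integral\<^sup>L M (\<lambda>\<omega>. (X 0 \<omega> - integral\<^sup>L M (X 0)) * (X (nat \<bar>h\<bar>) \<omega> - integral\<^sup>L M (X (nat \<bar>h\<bar>))))"

primrec walk_law :: "nat pmf \<Rightarrow> nat \<Rightarrow> nat pmf" where
  "walk_law S 0 = return_pmf 0"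
| "walk_law S (Suc n) = bind_pmf (walk_law S n) (\<lambda>t. map_pmf (\<lambda>d. t + d) S)"

text \<open>Covariance of the sampled process \<open>Y_n = X_{T_n}\<close>:
  \<open>\<sigma>_Y(0) = \<sigma>_X(0)\<close>, \<open>\<sigma>_Y(h) = E(\<sigma>_X(T_h))\<close> for \<open>h \<ge> 1\<close>, extended evenly to negative h.\<close>

definition sampled_cov :: "(int \<Rightarrow> real) \<Rightarrow> nat pmf \<Rightarrow> int \<Rightarrow> real" where
  "sampled_cov \<sigma> S h =
     (if h = 0 then \<sigma> 0
      else measure_pmf.expectation (walk_law S (nat \<bar>h\<bar>)) (\<lambda>k. \<sigma> (int k)))"

definition spectral_density :: "(int \<Rightarrow> real) \<Rightarrow> (real \<Rightarrow> real) \<Rightarrow> bool" where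
  "spectral_density \<sigma> f \<longleftrightarrow>
     set_integrable lborel {-pi..pi} f \<and>
     (\<forall>x\<in>{-pi..pi}. 0 \<le> f x) \<and>
     (\<forall>h::int. complex_of_real (\<sigma> h) =
         (\<integral>x\<in>{-pi..pi}. cis (real_of_int h * x) * complex_of_real (f x) \<partial>lborel))"

definition char_fun_S :: "nat pmf \<Rightarrow> real \<Rightarrow> complex" where
  "char_fun_S S \<theta> = (\<Sum>j. complex_of_real (pmf S j) * cis (real j * \<theta>))"

definition fY_partial :: "nat pmf \<Rightarrow> (real \<Rightarrow> real) \<Rightarrow> nat \<Rightarrow> real \<Rightarrow> complex" where
  "fY_partial S fX N t =
     complex_of_real (1 / (2 * pi)) *
     (\<Sum>j\<in>{-int N..int N}. cis (- real_of_int j * t) *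
        (\<integral>\<theta>\<in>{-pi..pi}. char_fun_S S \<theta> ^ nat \<bar>j\<bar> * complex_of_real (fX \<theta>) \<partial>lborel))"

end

theory Submission
  imports Defs
begin


lemma pmf_expect_nat:
  fixes g :: "nat \<Rightarrow> 'b::{banach,second_countable_topology}"
  assumes "\<And>k. norm (g k) \<le> B"
  shows "measure_pmf.expectation p g = (\<Sum>k. pmf p k *\<^sub>R g k)"
    and "summable (\<lambda>k. norm (pmf p k *\<^sub>R g k))"
proof -
  have int: "integrable (measure_pmf p) g"
    by (rule measure_pmf.integrable_const_bound[where B=B]) (use assms in auto)
  have int2: "integrable (count_space UNIV) (\<lambda>k. pmf p k *\<^sub>R g k)"
    using int unfolding measure_pmf_eq_density
    by (subst (asm) integrable_density) (auto simp: pmf_nonneg)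
  show "measure_pmf.expectation p g = (\<Sum>k. pmf p k *\<^sub>R g k)"
    unfolding measure_pmf_eq_density
    by (subst integral_density) (auto simp: pmf_nonneg intro!: integral_count_space_nat int2)
  show "summable (\<lambda>k. norm (pmf p k *\<^sub>R g k))"
    using int2 by (simp add: integrable_count_space_nat_iff)
qed

lemma walk_law_Suc':
  "walk_law S (Suc n) = bind_pmf S (\<lambda>d. map_pmf (\<lambda>t. t + d) (walk_law S n))"
proof (induction n)
  case 0
  then show ?case by (simp add: map_pmf_def bind_return_pmf bind_return_pmf')
next
  case (Suc n)
  have "walk_law S (Suc (Suc n)) = bind_pmf (walk_law S (Suc n)) (\<lambda>t. map_pmf (\<lambda>d. t + d) S)" by simp
  also have "\<dots> = bind_pmf (bind_pmf S (\<lambda>d. map_pmf (\<lambda>t. t + d) (walk_law S n))) (\<lambda>t. map_pmf (\<lambda>d. t + d) S)"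
    using Suc by simp
  also have "\<dots> = bind_pmf S (\<lambda>d. map_pmf (\<lambda>t. t + d) (walk_law S (Suc n)))"
    by (simp add: bind_assoc_pmf map_pmf_def bind_return_pmf add_ac)
  finally show ?case .
qed

lemma walk_law_0_prob:
  assumes "pmf S 0 = 0" "n \<ge> 1"
  shows "pmf (walk_law S n) 0 = 0"
proof -
  obtain m where n: "n = Suc m" using assms(2) by (cases n) auto
  have S0: "0 \<notin> set_pmf S" using assms(1) by (simp add: set_pmf_iff)
  have "0 \<notin> set_pmf (walk_law S (Suc m))"
    using S0 by (auto simp: set_bind_pmf)
  then show ?thesis using n by (simp add: pmf_eq_0_set_pmf)
qed

lemma pmf_walk_Suc:
  "pmf (walk_law S (Suc n)) k = (\<Sum>d\<le>k. pmf S d * pmf (walk_law S n) (k - d))"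
proof -
  have "pmf (walk_law S (Suc n)) k = measure_pmf.expectation S (\<lambda>d. pmf (map_pmf (\<lambda>t. t + d) (walk_law S n)) k)"
    unfolding walk_law_Suc' pmf_bind ..
  also have "\<dots> = measure_pmf.expectation S (\<lambda>d. if d \<le> k then pmf (walk_law S n) (k - d) else 0)"
  proof (intro Bochner_Integration.integral_cong refl)
    fix d
    show "pmf (map_pmf (\<lambda>t. t + d) (walk_law S n)) k = (if d \<le> k then pmf (walk_law S n) (k - d) else 0)"
    proof (cases "d \<le> k")
      case True
      have "pmf (map_pmf (\<lambda>t. t + d) (walk_law S n)) ((k - d) + d) = pmf (walk_law S n) (k - d)"
        by (rule pmf_map_inj') (auto simp: inj_def)
      then show ?thesis using True by simp
    next
      case False
      have "k \<notin> set_pmf (map_pmf (\<lambda>t. t + d) (walk_law S n))" using False by auto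
      then show ?thesis using False by (simp add: pmf_eq_0_set_pmf)
    qed
  qed
  also have "\<dots> = (\<Sum>d\<le>k. pmf S d *\<^sub>R (if d \<le> k then pmf (walk_law S n) (k - d) else 0))"
    by (rule integral_measure_pmf) (auto split: if_splits)
  also have "\<dots> = (\<Sum>d\<le>k. pmf S d * pmf (walk_law S n) (k - d))" by simp
  finally show ?thesis .
qed

lemma renewal_le1:
  assumes "pmf S 0 = 0"
  shows "(\<Sum>n<M. pmf (walk_law S n) k) \<le> 1"
proof (induction M arbitrary: k)
  case 0
  then show ?case by simp
next
  case (Suc M)
  have "(\<Sum>n<Suc M. pmf (walk_law S n) k) = pmf (walk_law S 0) k + (\<Sum>n<M. pmf (walk_law S (Suc n)) k)"
    by (subst sum.lessThan_Suc_shift) simp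
  also have "(\<Sum>n<M. pmf (walk_law S (Suc n)) k) = (\<Sum>d\<le>k. pmf S d * (\<Sum>n<M. pmf (walk_law S n) (k - d)))"
    by (simp only: pmf_walk_Suc sum_distrib_left sum.swap[of _ "{..<M}"])
  finally have eq: "(\<Sum>n<Suc M. pmf (walk_law S n) k) = pmf (return_pmf 0) k + (\<Sum>d\<le>k. pmf S d * (\<Sum>n<M. pmf (walk_law S n) (k - d)))"
    by simp
  have le: "(\<Sum>d\<le>k. pmf S d * (\<Sum>n<M. pmf (walk_law S n) (k - d))) \<le> (\<Sum>d\<le>k. pmf S d)"
    by (intro sum_mono mult_right_le_one_le) (auto intro!: sum_nonneg Suc.IH)
  show ?case
  proof (cases "k = 0")
    case True
    then show ?thesis using eq assms by simp
  next
    case False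
    have "(\<Sum>d\<le>k. pmf S d) = measure_pmf.prob S {..k}"
      by (simp add: measure_measure_pmf_finite)
    also have "\<dots> \<le> 1" by simp
    finally show ?thesis using eq le False by (simp add: pmf_return)
  qed
qed


declare walk_law.simps(2)[simp del]

lemma int_summable_from_nat:
  fixes g :: "int \<Rightarrow> real"
  assumes "\<And>h. g (-h) = g h" "summable (\<lambda>n. g (int n))" "\<And>h. g h \<ge> 0"
  shows "g summable_on UNIV"
proof -
  have s1: "(g \<circ> int) summable_on UNIV"
    using assms by (intro summable_nonneg_imp_summable_on) (auto simp: o_def)
  have A: "g summable_on (range int)"
    using s1 by (subst summable_on_reindex) (auto simp: inj_on_def)
  have s2: "(g \<circ> (\<lambda>n. - int n)) summable_on UNIV"
    using s1 assms(1) by (simp add: o_def)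
  have B: "g summable_on (range (\<lambda>n. - int n))"
    using s2 by (subst summable_on_reindex) (auto simp: inj_on_def)
  have U: "range int \<union> range (\<lambda>n. - int n) = (UNIV :: int set)"
  proof -
    have "x \<in> range int \<union> range (\<lambda>n. - int n)" for x :: int
    proof (cases "x \<ge> 0")
      case True then have "x = int (nat x)" by simp
      then show ?thesis by blast
    next
      case False then have "x = - int (nat (-x))" by simp
      then show ?thesis by blast
    qed
    then show ?thesis by blast
  qed
  show ?thesis using summable_on_union[OF A B] U by simp
qed

lemma nat_summable_from_int:
  fixes g :: "int \<Rightarrow> real"
  assumes "g summable_on UNIV"
  shows "g summable_on (range int)" "summable (\<lambda>n. g (int n))"
proof -
  show A: "g summable_on (range int)" by (rule summable_on_subset[OF assms]) auto
  have "(g \<circ> int) summable_on UNIV"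
    using A by (subst (asm) summable_on_reindex) (auto simp: inj_on_def)
  then show "summable (\<lambda>n. g (int n))" by (auto dest: summable_on_imp_summable simp: o_def)
qed

lemma abs_powr_convex:
  fixes p :: real assumes "p \<ge> 1"
  shows "convex_on UNIV (\<lambda>x::real. \<bar>x\<bar> powr p)"
proof (rule convex_onI)
  fix t x y :: real assume t: "0 < t" "t < 1"
  have c0: "(s * a) powr p \<le> s * a powr p" if "0 \<le> s" "s \<le> 1" "0 \<le> a" for s a :: real
  proof -
    have "(s * a) powr p = s powr p * a powr p" using that by (simp add: powr_mult)
    also have "s powr p \<le> s"
        using powr_mono'[of 1 p s] that assms by (cases "s = 0") auto
    then have "s powr p * a powr p \<le> s * a powr p" by (intro mult_right_mono) auto
    finally show ?thesis .
  qed
  have conv: "(t * a + (1 - t) * b) powr p \<le> t * a powr p + (1 - t) * b powr p"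
    if "a \<ge> 0" "b \<ge> 0" for a b :: real
  proof (cases "a = 0 \<or> b = 0")
    case True
    then show ?thesis
    proof
      assume "a = 0" then show ?thesis using c0[of "1 - t" b] t that by auto
    next
      assume "b = 0" then show ?thesis using c0[of t a] t that by auto
    qed
  next
    case False
    then have "a > 0" "b > 0" using that by auto
    then show ?thesis using convex_onD[OF powr_convex[OF assms], of "1 - t" a b] t
      by (simp add: algebra_simps)
  qed
  have "\<bar>(1 - t) *\<^sub>R x + t *\<^sub>R y\<bar> powr p \<le> ((1 - t) * \<bar>x\<bar> + t * \<bar>y\<bar>) powr p"
    using t assms by (intro powr_mono2) (auto simp: abs_mult intro: abs_triangle_ineq[THEN order_trans])
  also have "\<dots> \<le> (1 - t) * \<bar>x\<bar> powr p + t * \<bar>y\<bar> powr p"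
    using conv[of "\<bar>y\<bar>" "\<bar>x\<bar>"] by (simp add: algebra_simps)
  finally show "\<bar>(1 - t) *\<^sub>R x + t *\<^sub>R y\<bar> powr p \<le> (1 - t) * \<bar>x\<bar> powr p + t * \<bar>y\<bar> powr p" .
qed (simp add: convex_UNIV)

lemma part_i:
  fixes \<sigma> :: "int \<Rightarrow> real"
  assumes bnd: "\<And>h. \<bar>\<sigma> h\<bar> \<le> B" and S0: "pmf S 0 = 0" and p: "p \<ge> 1"
    and sum: "(\<lambda>h. \<bar>\<sigma> h\<bar> powr p) summable_on UNIV"
  shows "(\<lambda>h. \<bar>sampled_cov \<sigma> S h\<bar> powr p) summable_on UNIV"
proof -
  define a where "a k = \<bar>\<sigma> (int k)\<bar> powr p" for k :: nat
  have a_sum: "summable a" unfolding a_def by (rule nat_summable_from_int(2)[OF sum])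
  have a_nn: "a k \<ge> 0" for k by (simp add: a_def)
  have a_bnd: "norm (a k) \<le> B powr p" for k
    unfolding a_def using bnd[of "int k"] p by (auto intro!: powr_mono2)
  define b where "b h = \<bar>sampled_cov \<sigma> S h\<bar> powr p" for h
  have jensen: "b (int n) \<le> (\<Sum>k. pmf (walk_law S n) k * a k)" if "n \<ge> 1" for n
  proof -
    have int1: "integrable (measure_pmf (walk_law S n)) (\<lambda>k. \<sigma> (int k))"
      by (rule measure_pmf.integrable_const_bound[where B=B]) (use bnd in auto)
    have int2: "integrable (measure_pmf (walk_law S n)) (\<lambda>k. \<bar>\<sigma> (int k)\<bar> powr p)"
      by (rule measure_pmf.integrable_const_bound[where B="B powr p"]) (use a_bnd in \<open>auto simp: a_def\<close>)
    have "b (int n) = \<bar>measure_pmf.expectation (walk_law S n) (\<lambda>k. \<sigma> (int k))\<bar> powr p"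
      using that by (simp add: b_def sampled_cov_def)
    also have "\<dots> \<le> measure_pmf.expectation (walk_law S n) (\<lambda>k. \<bar>\<sigma> (int k)\<bar> powr p)"
      by (rule measure_pmf.jensens_inequality[where I=UNIV]) (use int1 int2 abs_powr_convex[OF p] in auto)
    also have "\<dots> = (\<Sum>k. pmf (walk_law S n) k *\<^sub>R a k)"
      unfolding a_def by (rule pmf_expect_nat(1)) (use a_bnd in \<open>auto simp: a_def\<close>)
    finally show ?thesis by simp
  qed
  have sumk: "summable (\<lambda>k. pmf (walk_law S n) k * a k)" for n
    using pmf_expect_nat(2)[of a "B powr p" "walk_law S n"] a_bnd a_nn by (simp add: pmf_nonneg)
  have "summable (\<lambda>n. b (int n))"
  proof (rule summableI_nonneg_bounded[where x="b 0 + (\<Sum>k. a k)"])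
    fix M
    show "(\<Sum>n<M. b (int n)) \<le> b 0 + (\<Sum>k. a k)"
    proof (cases M)
      case 0 then show ?thesis using a_sum a_nn by (simp add: b_def suminf_nonneg)
    next
      case (Suc M')
      have "(\<Sum>n<M. b (int n)) = b 0 + (\<Sum>n<M'. b (int (Suc n)))"
        unfolding Suc by (subst sum.lessThan_Suc_shift) simp
      also have "(\<Sum>n<M'. b (int (Suc n))) \<le> (\<Sum>n<M'. \<Sum>k. pmf (walk_law S (Suc n)) k * a k)"
        by (intro sum_mono jensen) auto
      also have "\<dots> = (\<Sum>k. \<Sum>n<M'. pmf (walk_law S (Suc n)) k * a k)"
        by (rule suminf_sum[symmetric]) (use sumk in auto)
      also have "\<dots> \<le> (\<Sum>k. a k)"
      proof (rule suminf_le)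
        fix k
        have "(\<Sum>n<M'. pmf (walk_law S (Suc n)) k) \<le> (\<Sum>n<Suc M'. pmf (walk_law S n) k)"
          by (subst sum.lessThan_Suc_shift) (simp add: pmf_nonneg)
        also have "\<dots> \<le> 1" by (rule renewal_le1[OF S0])
        finally have "(\<Sum>n<M'. pmf (walk_law S (Suc n)) k) * a k \<le> a k"
          using a_nn[of k] by (simp add: mult_left_le_one_le sum_nonneg pmf_nonneg)
        then show "(\<Sum>n<M'. pmf (walk_law S (Suc n)) k * a k) \<le> a k"
          by (simp add: sum_distrib_right)
      next
        show "summable (\<lambda>k. \<Sum>n<M'. pmf (walk_law S (Suc n)) k * a k)"
          by (intro summable_sum) (use sumk in auto)
      qed (rule a_sum)
      finally show ?thesis by simp
    qed
  qed (simp add: b_def)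
  moreover have "b (-h) = b h" for h by (simp add: b_def sampled_cov_def)
  ultimately show ?thesis
    using int_summable_from_nat[of b] unfolding b_def by auto
qed


lemma has_integral_cis:
  fixes m :: int
  shows "((\<lambda>x. cis (real_of_int m * x)) has_integral (if m = 0 then complex_of_real (2*pi) else 0)) {-pi..pi}"
proof (cases "m = 0")
  case True
  then show ?thesis using has_integral_const_real[of "1::complex" "-pi" pi]
    by (simp add: scaleR_conv_of_real)
next
  case False
  define F where "F x = cis (real_of_int m * x) / (\<i> * of_int m)" for x
  have D: "(F has_vector_derivative cis (real_of_int m * x)) (at x within {-pi..pi})" for x
  proof -
    have "((\<lambda>z. exp (\<i> * of_int m * z) / (\<i> * of_int m)) has_field_derivative exp (\<i> * of_int m * of_real x)) (at (of_real x))"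
      using False by (auto intro!: derivative_eq_intros)
    from has_vector_derivative_real_field[OF this]
    have "((\<lambda>y. exp (\<i> * of_int m * of_real y) / (\<i> * of_int m)) has_vector_derivative exp (\<i> * of_int m * of_real x)) (at x)" .
    then show ?thesis unfolding F_def cis_conv_exp
      by (auto intro: has_vector_derivative_at_within simp: mult_ac)
  qed
  have "(\<lambda>x. cis (real_of_int m * x)) = (\<lambda>x. cis (real_of_int m * x))" ..
  have "((\<lambda>x. cis (real_of_int m * x)) has_integral (F pi - F (-pi))) {-pi..pi}"
    by (rule fundamental_theorem_of_calculus) (use D in auto)
  moreover have "F pi = F (-pi)"
  proof -
    have "cis (real_of_int m * pi) = cis (real_of_int m * (-pi))"
    proof -
      have "cis (real_of_int m * pi) = cis (real_of_int m * (-pi) + 2 * pi * real_of_int m)"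
        by (rule arg_cong[where f=cis]) (simp add: algebra_simps)
      also have "\<dots> = cis (real_of_int m * (-pi)) * cis (2 * pi * real_of_int m)"
        by (simp only: cis_mult)
      also have "cis (2 * pi * real_of_int m) = 1"
        by (rule cis_multiple_2pi) simp
      finally show ?thesis by simp
    qed
    then show ?thesis by (simp add: F_def)
  qed
  ultimately show ?thesis using False by simp
qed

lemma cmod_sq_sum_cis:
  fixes a :: "int \<Rightarrow> complex"
  shows "complex_of_real ((cmod (\<Sum>h\<in>H. a h * cis (real_of_int h * x)))\<^sup>2) =
    (\<Sum>h\<in>H. \<Sum>k\<in>H. (a h * cnj (a k)) * cis (real_of_int (h - k) * x))"
proof -
  have "complex_of_real ((cmod (\<Sum>h\<in>H. a h * cis (real_of_int h * x)))\<^sup>2) =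
    (\<Sum>h\<in>H. a h * cis (real_of_int h * x)) * cnj (\<Sum>k\<in>H. a k * cis (real_of_int k * x))"
    by (rule complex_norm_square)
  also have "\<dots> = (\<Sum>h\<in>H. \<Sum>k\<in>H. (a h * cis (real_of_int h * x)) * (cnj (a k) * cis (- (real_of_int k * x))))"
    by (simp add: sum_distrib_left sum_distrib_right cis_cnj, rule sum.swap)
  also have "\<dots> = (\<Sum>h\<in>H. \<Sum>k\<in>H. (a h * cnj (a k)) * cis (real_of_int (h - k) * x))"
  proof (intro sum.cong refl)
    fix h k
    have "cis (real_of_int h * x) * cis (- (real_of_int k * x)) = cis (real_of_int (h - k) * x)"
      by (simp add: cis_mult algebra_simps)
    then show "(a h * cis (real_of_int h * x)) * (cnj (a k) * cis (- (real_of_int k * x))) = (a h * cnj (a k)) * cis (real_of_int (h - k) * x)"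
      by (metis (no_types, lifting) mult.assoc mult.left_commute)
  qed
  finally show ?thesis .
qed

lemma parseval_has_integral:
  fixes a :: "int \<Rightarrow> complex"
  assumes "finite H"
  shows "((\<lambda>x. (cmod (\<Sum>h\<in>H. a h * cis (real_of_int h * x)))\<^sup>2) has_integral
           (2 * pi * (\<Sum>h\<in>H. (cmod (a h))\<^sup>2))) {-pi..pi}"
proof -
  have "((\<lambda>x. \<Sum>h\<in>H. \<Sum>k\<in>H. (a h * cnj (a k)) * cis (real_of_int (h - k) * x)) has_integral
      (\<Sum>h\<in>H. \<Sum>k\<in>H. (a h * cnj (a k)) * (if h - k = 0 then complex_of_real (2*pi) else 0))) {-pi..pi}"
    by (intro has_integral_sum assms has_integral_mult_right has_integral_cis)
  also have "(\<Sum>h\<in>H. \<Sum>k\<in>H. (a h * cnj (a k)) * (if h - k = 0 then complex_of_real (2*pi) else 0))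
      = (\<Sum>h\<in>H. (a h * cnj (a h)) * complex_of_real (2*pi))"
  proof (intro sum.cong refl)
    fix h assume "h \<in> H"
    have "(\<Sum>k\<in>H. (a h * cnj (a k)) * (if h - k = 0 then complex_of_real (2*pi) else 0))
        = (\<Sum>k\<in>H. if k = h then (a h * cnj (a k)) * complex_of_real (2*pi) else 0)"
      by (intro sum.cong refl) auto
    also have "\<dots> = (a h * cnj (a h)) * complex_of_real (2*pi)"
      using \<open>h \<in> H\<close> assms by (simp add: sum.delta)
    finally show "(\<Sum>k\<in>H. (a h * cnj (a k)) * (if h - k = 0 then complex_of_real (2*pi) else 0))
        = (a h * cnj (a h)) * complex_of_real (2*pi)" .
  qed
  also have "\<dots> = complex_of_real (2 * pi * (\<Sum>h\<in>H. (cmod (a h))\<^sup>2))"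
    by (simp add: complex_norm_square[symmetric] sum_distrib_left sum_distrib_right mult_ac del: of_real_power)
  finally have "((\<lambda>x. complex_of_real ((cmod (\<Sum>h\<in>H. a h * cis (real_of_int h * x)))\<^sup>2)) has_integral
      complex_of_real (2 * pi * (\<Sum>h\<in>H. (cmod (a h))\<^sup>2))) {-pi..pi}"
    by (simp only: cmod_sq_sum_cis)
  from has_integral_linear[OF this bounded_linear_Re]
  show ?thesis by (simp add: o_def)
qed

lemma parseval_nn:
  fixes a :: "int \<Rightarrow> complex"
  assumes "finite H"
  shows "(\<integral>\<^sup>+x\<in>{-pi..pi}. ennreal ((cmod (\<Sum>h\<in>H. a h * cis (real_of_int h * x)))\<^sup>2) \<partial>lborel)
     = ennreal (2 * pi * (\<Sum>h\<in>H. (cmod (a h))\<^sup>2))"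
  by (rule nn_integral_has_integral_lebesgue'[OF _ parseval_has_integral[OF assms]]) simp


lemma dom_series:
  fixes d :: "nat \<Rightarrow> real" and g :: "nat \<Rightarrow> nat \<Rightarrow> real"
  assumes d: "summable d" and g: "\<And>N n. 0 \<le> g N n" "\<And>N n. g N n \<le> d n"
    and lim: "\<And>n. (\<lambda>N. g N n) \<longlonglongrightarrow> 0"
  shows "(\<lambda>N. \<Sum>n. g N n) \<longlonglongrightarrow> 0" "\<And>N. summable (g N)"
proof -
  have dn: "0 \<le> d n" for n using g(1)[of 0 n] g(2)[of 0 n] by linarith
  have intd: "integrable (count_space UNIV) d"
    using d dn by (simp add: integrable_count_space_nat_iff)
  have "(\<lambda>N. integral\<^sup>L (count_space UNIV) (g N)) \<longlonglongrightarrow> integral\<^sup>L (count_space UNIV) (\<lambda>n. 0::real)"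
    using integral_dominated_convergence[where w=d and s=g and f="\<lambda>n. 0" and M="count_space UNIV"] intd lim g
    by auto
  moreover have intg: "integrable (count_space UNIV) (g N)" for N
    by (rule integrable_dominated_convergence2[where w=d and f="\<lambda>n. 0"]) (use intd lim g in auto)
  ultimately show "(\<lambda>N. \<Sum>n. g N n) \<longlonglongrightarrow> 0"
    by (simp add: integral_count_space_nat)
  show "summable (g N)" for N
    using intg[of N] g by (simp add: integrable_count_space_nat_iff)
qed

lemma sum_even:
  fixes g :: "int \<Rightarrow> 'b::comm_monoid_add"
  assumes "\<And>h. g (-h) = g h"
  shows "(\<Sum>h\<in>{-int K..int K}. g h) = g 0 + ((\<Sum>n\<in>{1..K}. g (int n)) + (\<Sum>n\<in>{1..K}. g (int n)))"
proof -
  have split: "{-int K..int K} = {0} \<union> (int ` {1..K} \<union> (\<lambda>n. - int n) ` {1..K})"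
  proof (intro equalityI subsetI)
    fix x assume x: "x \<in> {-int K..int K}"
    consider "x = 0" | "x > 0" | "x < 0" by linarith
    then show "x \<in> {0} \<union> (int ` {1..K} \<union> (\<lambda>n. - int n) ` {1..K})"
    proof cases
      case 2
      then have "x = int (nat x)" "nat x \<in> {1..K}" using x by auto
      then show ?thesis by blast
    next
      case 3
      then have "x = - int (nat (-x))" "nat (-x) \<in> {1..K}" using x by auto
      then show ?thesis by blast
    qed simp
  qed auto
  have "(\<Sum>h\<in>{-int K..int K}. g h) = g 0 + (\<Sum>h\<in>int ` {1..K} \<union> (\<lambda>n. - int n) ` {1..K}. g h)"
    unfolding split by (subst sum.union_disjoint) auto
  also have "(\<Sum>h\<in>int ` {1..K} \<union> (\<lambda>n. - int n) ` {1..K}. g h) =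
      (\<Sum>h\<in>int ` {1..K}. g h) + (\<Sum>h\<in>(\<lambda>n. - int n) ` {1..K}. g h)"
    by (subst sum.union_disjoint) auto
  also have "(\<Sum>h\<in>int ` {1..K}. g h) = (\<Sum>n\<in>{1..K}. g (int n))"
    by (subst sum.reindex) (auto simp: inj_on_def)
  also have "(\<Sum>h\<in>(\<lambda>n. - int n) ` {1..K}. g h) = (\<Sum>n\<in>{1..K}. g (int n))"
    by (subst sum.reindex) (auto simp: inj_on_def assms)
  finally show ?thesis .
qed

definition P :: "(int \<Rightarrow> real) \<Rightarrow> nat \<Rightarrow> real \<Rightarrow> complex" where
  "P a K x = (\<Sum>h\<in>{-int K..int K}. complex_of_real (a h) * cis (real_of_int h * x))"

definition trunc :: "nat \<Rightarrow> (int \<Rightarrow> real) \<Rightarrow> int \<Rightarrow> real" where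
  "trunc N a h = (if \<bar>h\<bar> \<le> int N then a h else 0)"

lemma P_trunc: "N \<le> K \<Longrightarrow> P a N x = P (trunc N a) K x"
  unfolding P_def trunc_def
  by (rule sum.mono_neutral_cong_left) auto

lemma P_diff: "P a K x - P b K x = P (\<lambda>h. a h - b h) K x"
  unfolding P_def by (simp add: sum_subtractf[symmetric] algebra_simps)

lemma P_real:
  assumes "\<And>h. a (-h) = a h"
  shows "P a K x = complex_of_real (Re (P a K x))"
proof -
  have "cnj (P a K x) = (\<Sum>h\<in>{-int K..int K}. complex_of_real (a h) * cis (- (real_of_int h * x)))"
    unfolding P_def by (simp add: cis_cnj)
  also have "\<dots> = P a K x"
    unfolding P_def
    by (rule sum.reindex_bij_witness[where i=uminus and j=uminus]) (auto simp: assms)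
  finally have "cnj (P a K x) = P a K x" .
  then have "Im (cnj (P a K x)) = Im (P a K x)" by simp
  then have "Im (P a K x) = 0" by simp
  then show ?thesis by (simp add: complex_eq_iff)
qed

lemma P_dist:
  "(\<integral>\<^sup>+x\<in>{-pi..pi}. ennreal ((cmod (P a K x - P b K x))\<^sup>2) \<partial>lborel)
     = ennreal (2 * pi * (\<Sum>h\<in>{-int K..int K}. (a h - b h)\<^sup>2))"
proof -
  have e: "cmod (complex_of_real u - complex_of_real v) = \<bar>u - v\<bar>" for u v
    by (metis norm_of_real of_real_diff)
  show ?thesis
    unfolding P_diff unfolding P_def
    using parseval_nn[of "{-int K..int K}" "\<lambda>h. complex_of_real (a h - b h)"]
    by (simp add: e)
qed

lemma P_cont: "continuous_on UNIV (P a K)"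
  unfolding P_def by (intro continuous_intros)

lemma P_borel[measurable]: "P a K \<in> borel_measurable borel"
  using P_cont by (intro borel_measurable_continuous_onI) auto

lemma L1_le_L2:
  fixes g :: "real \<Rightarrow> real"
  assumes [measurable]: "g \<in> borel_measurable borel" and \<delta>: "\<delta> > 0"
    and L2: "(\<integral>\<^sup>+x\<in>{-pi..pi}. ennreal ((g x)\<^sup>2) \<partial>lborel) \<le> ennreal \<delta>"
  shows "(\<integral>\<^sup>+x\<in>{-pi..pi}. ennreal \<bar>g x\<bar> \<partial>lborel) \<le> ennreal ((pi + 1) * sqrt \<delta>)"
proof -
  define e where "e = sqrt \<delta>"
  have e: "e > 0" using \<delta> by (simp add: e_def)
  have pt: "\<bar>t\<bar> \<le> e / 2 + t\<^sup>2 / (2 * e)" for t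
  proof -
    have "0 \<le> (\<bar>t\<bar> - e)\<^sup>2" by simp
    then have "2 * e * \<bar>t\<bar> \<le> e\<^sup>2 + t\<^sup>2" by (simp add: power2_eq_square algebra_simps)
    then show ?thesis using e by (simp add: field_simps power2_eq_square)
  qed
  have "(\<integral>\<^sup>+x\<in>{-pi..pi}. ennreal \<bar>g x\<bar> \<partial>lborel) \<le>
      (\<integral>\<^sup>+x. (ennreal (e/2) * indicator {-pi..pi} x + ennreal (1/(2*e)) * (ennreal ((g x)\<^sup>2) * indicator {-pi..pi} x)) \<partial>lborel)"
  proof (intro nn_integral_mono)
    fix x
    have "ennreal \<bar>g x\<bar> \<le> ennreal (e/2) + ennreal (1/(2*e)) * ennreal ((g x)\<^sup>2)"
      using pt[of "g x"] e by (simp add: ennreal_plus[symmetric] ennreal_mult[symmetric] del: ennreal_plus)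
    then show "ennreal \<bar>g x\<bar> * indicator {-pi..pi} x \<le>
      ennreal (e/2) * indicator {-pi..pi} x + ennreal (1/(2*e)) * (ennreal ((g x)\<^sup>2) * indicator {-pi..pi} x)"
      by (auto split: split_indicator)
  qed
  also have "\<dots> = ennreal (e/2) * emeasure lborel {-pi..pi} + ennreal (1/(2*e)) * (\<integral>\<^sup>+x\<in>{-pi..pi}. ennreal ((g x)\<^sup>2) \<partial>lborel)"
    by (subst nn_integral_add) (auto simp: nn_integral_cmult)
  also have "\<dots> \<le> ennreal (e/2) * ennreal (2*pi) + ennreal (1/(2*e)) * ennreal \<delta>"
    using L2 by (intro add_mono mult_left_mono) auto
  also have "\<dots> = ennreal (e * pi + \<delta> / (2 * e))"
    using e \<delta> by (simp add: ennreal_mult[symmetric] ennreal_plus[symmetric] del: ennreal_plus)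
  also have "e * pi + \<delta> / (2 * e) = (pi + 1/2) * sqrt \<delta>"
    using \<delta> by (simp add: e_def field_simps power2_eq_square[symmetric])
  also have "\<dots> \<le> (pi + 1) * sqrt \<delta>" using \<delta> by (intro mult_right_mono) auto
  finally show ?thesis by (simp add: ennreal_leI order_trans)
qed


lemma cmod_of_real_diff[simp]: "cmod (complex_of_real u - complex_of_real v) = \<bar>u - v\<bar>"
  by (metis norm_of_real of_real_diff)

lemma RF_core:
  fixes c :: "int \<Rightarrow> real"
  assumes even: "\<And>h. c (-h) = c h" and sq: "summable (\<lambda>n. (c (int n))\<^sup>2)"
  obtains f :: "real \<Rightarrow> real" where "f \<in> borel_measurable borel"
    "\<And>a N B. (\<And>K. K \<ge> N \<Longrightarrow> 2 * pi * (\<Sum>h\<in>{-int K..int K}. (trunc N a h - c h / (2*pi))\<^sup>2) \<le> B) \<Longrightarrow>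
       (\<integral>\<^sup>+x\<in>{-pi..pi}. ennreal ((cmod (P a N x - complex_of_real (f x)))\<^sup>2) \<partial>lborel) \<le> ennreal B"
proof -
  define cc where "cc h = c h / (2*pi)" for h
  have cc_even: "cc (-h) = cc h" for h by (simp add: cc_def even)
  define d where "d n = (cc (int n))\<^sup>2" for n
  have d_sum: "summable d"
    unfolding d_def cc_def using summable_mult[OF sq, of "(1/(2*pi))\<^sup>2"]
    by (simp add: power_divide field_simps)
  have d_nn: "0 \<le> d n" for n by (simp add: d_def)
  define R where "R N x = Re (P cc N x)" for N x
  have PR: "P cc N x = complex_of_real (R N x)" for N x
    unfolding R_def by (rule P_real) (rule cc_even)
  have R_cont: "continuous_on UNIV (R N)" for N
    unfolding R_def using P_cont by (intro continuous_intros) auto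
  have R_borel[measurable]: "R N \<in> borel_measurable borel" for N
    using R_cont by (intro borel_measurable_continuous_onI) auto
  define tl where "tl N = (\<Sum>n. if n > N then d n else 0)" for N
  have tl: "tl \<longlonglongrightarrow> 0" "\<And>N. summable (\<lambda>n. if n > N then d n else 0)"
  proof -
    have g_lim: "(\<lambda>N. if n > N then d n else 0) \<longlonglongrightarrow> 0" for n
      by (rule tendsto_eventually) (auto simp: eventually_sequentially intro!: exI[of _ n])
    have g1: "0 \<le> (if n > N then d n else 0)" "(if n > N then d n else 0) \<le> d n" for N n
      using d_nn[of n] by auto
    note D = dom_series[OF d_sum, of "\<lambda>N n. if n > N then d n else 0", OF g1 g_lim]
    show "tl \<longlonglongrightarrow> 0" unfolding tl_def by (rule D(1))
    show "\<And>N. summable (\<lambda>n. if n > N then d n else 0)" by (rule D(2))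
  qed
  have tl_mono: "tl M \<le> tl N" if "N \<le> M" for N M
    unfolding tl_def by (rule suminf_le) (use that d_nn tl(2) in auto)
  have part_le_tl: "(\<Sum>n\<in>{N<..M}. d n) \<le> tl N" for N M
  proof -
    have "(\<Sum>n\<in>{N<..M}. d n) = (\<Sum>n<Suc M. if n > N then d n else 0)"
      by (rule sum.mono_neutral_cong_left) auto
    also have "\<dots> \<le> tl N" unfolding tl_def
      by (rule sum_le_suminf) (use tl(2) d_nn in auto)
    finally show ?thesis .
  qed
  have sum_trunc: "(\<Sum>h\<in>{-int K..int K}. (trunc N a h - cc h)\<^sup>2) =
      2 * (\<Sum>n\<in>{1..K}. (trunc N a (int n) - cc (int n))\<^sup>2) + (a 0 - cc 0)\<^sup>2"
    if "\<And>h. a (-h) = a h" for a N K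
    using sum_even[of "\<lambda>h. (trunc N a h - cc h)\<^sup>2" K] that cc_even
    by (simp add: trunc_def)
  have dist_tail: "(\<integral>\<^sup>+x\<in>{-pi..pi}. ennreal ((R N x - R M x)\<^sup>2) \<partial>lborel) = ennreal (4 * pi * (\<Sum>n\<in>{N<..M}. d n))"
    if "N \<le> M" for N M
  proof -
    have "(\<integral>\<^sup>+x\<in>{-pi..pi}. ennreal ((R N x - R M x)\<^sup>2) \<partial>lborel) =
        (\<integral>\<^sup>+x\<in>{-pi..pi}. ennreal ((cmod (P (trunc N cc) M x - P cc M x))\<^sup>2) \<partial>lborel)"
    proof (intro nn_integral_cong)
      fix x
      have "P (trunc N cc) M x - P cc M x = complex_of_real (R N x - R M x)"
        using P_trunc[OF that, of cc x] PR[of N x] PR[of M x] by simp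
      then have "cmod (P (trunc N cc) M x - P cc M x) = \<bar>R N x - R M x\<bar>" by simp
      then show "ennreal ((R N x - R M x)\<^sup>2) * indicator {-pi..pi} x =
          ennreal ((cmod (P (trunc N cc) M x - P cc M x))\<^sup>2) * indicator {-pi..pi} x" by simp
    qed
    also have "\<dots> = ennreal (2 * pi * (\<Sum>h\<in>{-int M..int M}. (trunc N cc h - cc h)\<^sup>2))"
      by (rule P_dist)
    also have "(\<Sum>h\<in>{-int M..int M}. (trunc N cc h - cc h)\<^sup>2) = 2 * (\<Sum>n\<in>{1..M}. (trunc N cc (int n) - cc (int n))\<^sup>2) + 0"
      using sum_trunc[of cc N M] cc_even by (simp add: trunc_def)
    also have "(\<Sum>n\<in>{1..M}. (trunc N cc (int n) - cc (int n))\<^sup>2) = (\<Sum>n\<in>{N<..M}. d n)"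
      by (rule sum.mono_neutral_cong_right) (auto simp: trunc_def d_def)
    finally show ?thesis by (simp add: algebra_simps)
  qed
  define s where "s n x = indicator {-pi..pi} x * R n x" for n x
  have s_int: "integrable lborel (s n)" for n
    using borel_integrable_atLeastAtMost'[of "-pi" pi "R n"] continuous_on_subset[OF R_cont[of n]]
    unfolding set_integrable_def s_def by simp
  have s_borel[measurable]: "s n \<in> borel_measurable borel" for n
    unfolding s_def by measurable
  have L1_small: "LINT x|lborel. norm (s i x - s j x) \<le> (pi + 1) * sqrt \<delta>"
    if "N \<le> i" "N \<le> j" "\<delta> > 0" "4 * pi * tl N \<le> \<delta>" for N i j \<delta>
  proof -
    have key: "LINT x|lborel. norm (s i x - s j x) \<le> (pi + 1) * sqrt \<delta>" if ij: "N \<le> i" "i \<le> j" for i j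
    proof -
      have "(\<integral>\<^sup>+x\<in>{-pi..pi}. ennreal ((R i x - R j x)\<^sup>2) \<partial>lborel) = ennreal (4 * pi * (\<Sum>n\<in>{i<..j}. d n))"
        by (rule dist_tail) (use ij in auto)
      also have "4 * pi * (\<Sum>n\<in>{i<..j}. d n) \<le> 4 * pi * tl N"
        using part_le_tl[of i j] tl_mono[of N i] ij by simp
      also have "\<dots> \<le> \<delta>" by fact
      finally have L2: "(\<integral>\<^sup>+x\<in>{-pi..pi}. ennreal ((R i x - R j x)\<^sup>2) \<partial>lborel) \<le> ennreal \<delta>"
        by (simp add: ennreal_leI)
      have L1: "(\<integral>\<^sup>+x\<in>{-pi..pi}. ennreal \<bar>R i x - R j x\<bar> \<partial>lborel) \<le> ennreal ((pi + 1) * sqrt \<delta>)"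
        by (rule L1_le_L2[OF _ \<open>\<delta> > 0\<close> L2]) simp
      have "LINT x|lborel. norm (s i x - s j x) = enn2real (\<integral>\<^sup>+x. ennreal (norm (s i x - s j x)) \<partial>lborel)"
        by (rule integral_eq_nn_integral) auto
      also have "(\<integral>\<^sup>+x. ennreal (norm (s i x - s j x)) \<partial>lborel) = (\<integral>\<^sup>+x\<in>{-pi..pi}. ennreal \<bar>R i x - R j x\<bar> \<partial>lborel)"
        by (intro nn_integral_cong) (auto simp: s_def split: split_indicator)
      also have "enn2real \<dots> \<le> (pi + 1) * sqrt \<delta>"
        using L1 by (intro enn2real_leI) (use \<open>\<delta> > 0\<close> in auto)
      finally show ?thesis .
    qed
    show ?thesis
    proof (cases "i \<le> j")
      case True then show ?thesis using key that by auto
    next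
      case False
      then have "LINT x|lborel. norm (s j x - s i x) \<le> (pi + 1) * sqrt \<delta>" using key that by auto
      moreover have "(LINT x|lborel. norm (s j x - s i x)) = (LINT x|lborel. norm (s i x - s j x))"
        by (intro Bochner_Integration.integral_cong refl) (simp add: norm_minus_commute)
      ultimately show ?thesis by simp
    qed
  qed
  have cauchy: "\<exists>N. \<forall>i\<ge>N. \<forall>j\<ge>N. LINT x|lborel. norm (s i x - s j x) < e" if "e > 0" for e
  proof -
    define \<delta> where "\<delta> = (e / (2 * (pi + 1)))\<^sup>2"
    have \<delta>: "\<delta> > 0" using that pi_gt_zero unfolding \<delta>_def by (intro zero_less_power divide_pos_pos) (auto intro: add_pos_pos)
    have sq\<delta>: "(pi + 1) * sqrt \<delta> = e / 2"
    proof -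
      have pp: "pi + 1 > 0" using pi_gt_zero by linarith
      have "sqrt \<delta> = e / (2 * (pi + 1))" unfolding \<delta>_def using that pp by simp
      then show ?thesis using pp by (simp add: field_simps)
    qed
    have "\<forall>\<^sub>F N in sequentially. tl N < \<delta> / (4 * pi)"
      using tl(1) \<delta> by (intro order_tendstoD) auto
    then obtain N where N: "tl N < \<delta> / (4 * pi)" by (auto simp: eventually_sequentially)
    then have "4 * pi * tl N \<le> \<delta>" by (simp add: field_simps)
    then show ?thesis using L1_small[OF _ _ \<delta>] sq\<delta> that
      by (intro exI[of _ N]) (smt (verit, best) field_sum_of_halves)
  qed
  obtain r where r: "strict_mono r" and ae: "AE x in lborel. Cauchy (\<lambda>i. s (r i) x)"
    using cauchy_L1_AE_cauchy_subseq[OF s_int cauchy] by blast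
  define f where "f x = lim (\<lambda>i. s (r i) x)" for x
  have f_borel: "f \<in> borel_measurable borel"
    unfolding f_def by measurable
  have ae_lim: "AE x in lborel. (\<lambda>i. s (r i) x) \<longlonglongrightarrow> f x"
    using ae by eventually_elim (auto simp: f_def Cauchy_convergent_iff convergent_LIMSEQ_iff)
  show ?thesis
  proof (rule that[OF f_borel])
    fix a N B
    assume B: "\<And>K. K \<ge> N \<Longrightarrow> 2 * pi * (\<Sum>h\<in>{-int K..int K}. (trunc N a h - c h / (2*pi))\<^sup>2) \<le> B"
    define u where "u k x = ennreal ((cmod (P a N x - P cc (r k) x))\<^sup>2) * indicator {-pi..pi} x" for k x
    have u_borel: "u k \<in> borel_measurable lborel" for k unfolding u_def by measurable
    have "(\<integral>\<^sup>+x\<in>{-pi..pi}. ennreal ((cmod (P a N x - complex_of_real (f x)))\<^sup>2) \<partial>lborel)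
        = (\<integral>\<^sup>+x. liminf (\<lambda>k. u k x) \<partial>lborel)"
    proof (rule nn_integral_cong_AE)
      show "AE x in lborel. ennreal ((cmod (P a N x - complex_of_real (f x)))\<^sup>2) * indicator {-pi..pi} x = liminf (\<lambda>k. u k x)"
        using ae_lim
      proof eventually_elim
        case (elim x)
        show ?case
        proof (cases "x \<in> {-pi..pi}")
          case True
          then have "(\<lambda>k. R (r k) x) \<longlonglongrightarrow> f x" using elim by (simp add: s_def)
          then have "(\<lambda>k. ennreal ((cmod (P a N x - complex_of_real (R (r k) x)))\<^sup>2)) \<longlonglongrightarrow>
              ennreal ((cmod (P a N x - complex_of_real (f x)))\<^sup>2)"
            by (intro tendsto_intros)
          then have "liminf (\<lambda>k. u k x) = ennreal ((cmod (P a N x - complex_of_real (f x)))\<^sup>2)"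
            unfolding u_def PR using True by (intro lim_imp_Liminf) auto
          then show ?thesis using True by simp
        next
          case False
          then show ?thesis by (simp add: u_def Liminf_const)
        qed
      qed
    qed
    also have "\<dots> \<le> liminf (\<lambda>k. integral\<^sup>N lborel (u k))"
      by (rule nn_integral_liminf) (rule u_borel)
    also have "\<dots> \<le> ennreal B"
    proof (rule Liminf_le)
      have "eventually (\<lambda>k. r k \<ge> N) sequentially"
        using r by (metis eventually_sequentiallyI order.trans seq_suble)
      then show "\<forall>\<^sub>F k in sequentially. integral\<^sup>N lborel (u k) \<le> ennreal B"
      proof eventually_elim
        case (elim k)
        have "integral\<^sup>N lborel (u k) = (\<integral>\<^sup>+x\<in>{-pi..pi}. ennreal ((cmod (P (trunc N a) (r k) x - P cc (r k) x))\<^sup>2) \<partial>lborel)"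
          unfolding u_def using P_trunc[OF elim, of a] by simp
        also have "\<dots> = ennreal (2 * pi * (\<Sum>h\<in>{-int (r k)..int (r k)}. (trunc N a h - cc h)\<^sup>2))"
          by (rule P_dist)
        also have "\<dots> \<le> ennreal B"
          using B[OF elim] by (intro ennreal_leI) (simp add: cc_def)
        finally show ?case .
      qed
    qed simp
    finally show "(\<integral>\<^sup>+x\<in>{-pi..pi}. ennreal ((cmod (P a N x - complex_of_real (f x)))\<^sup>2) \<partial>lborel) \<le> ennreal B" .
  qed
qed


lemma cis_borel[measurable]: "(\<lambda>x::real. cis (r * x)) \<in> borel_measurable borel"
  by (rule borel_measurable_continuous_onI) (auto intro!: continuous_intros)

lemma tail_bound:
  fixes d :: "nat \<Rightarrow> real"
  assumes d_sum: "summable d" and d_nn: "\<And>n. 0 \<le> d n"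
  obtains tl where "tl \<longlonglongrightarrow> 0" "\<And>N M. (\<Sum>n\<in>{N<..M}. d n) \<le> tl N" "\<And>N. 0 \<le> tl N"
proof -
  define tl where "tl N = (\<Sum>n. if n > N then d n else 0)" for N
  have g_lim: "(\<lambda>N. if n > N then d n else 0) \<longlonglongrightarrow> 0" for n
    by (rule tendsto_eventually) (auto simp: eventually_sequentially intro!: exI[of _ n])
  have g1: "0 \<le> (if n > N then d n else 0)" "(if n > N then d n else 0) \<le> d n" for N n
    using d_nn[of n] by auto
  note D = dom_series[OF d_sum, of "\<lambda>N n. if n > N then d n else 0", OF g1 g_lim]
  have part_le_tl: "(\<Sum>n\<in>{N<..M}. d n) \<le> tl N" for N M
  proof -
    have "(\<Sum>n\<in>{N<..M}. d n) = (\<Sum>n<Suc M. if n > N then d n else 0)"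
      by (rule sum.mono_neutral_cong_left) auto
    also have "\<dots> \<le> tl N" unfolding tl_def
      by (rule sum_le_suminf) (use D(2) d_nn in auto)
    finally show ?thesis .
  qed
  have "0 \<le> tl N" for N unfolding tl_def by (rule suminf_nonneg) (use D(2) d_nn in auto)
  then show ?thesis using that[of tl] D(1) part_le_tl unfolding tl_def by auto
qed

lemma sum_trunc_even:
  fixes a b :: "int \<Rightarrow> real"
  assumes "\<And>h. a (-h) = a h" "\<And>h. b (-h) = b h"
  shows "(\<Sum>h\<in>{-int K..int K}. (trunc N a h - b h)\<^sup>2) =
      2 * (\<Sum>n\<in>{1..K}. (trunc N a (int n) - b (int n))\<^sup>2) + (a 0 - b 0)\<^sup>2"
  using sum_even[of "\<lambda>h. (trunc N a h - b h)\<^sup>2" K] assms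
  by (simp add: trunc_def)

lemma L1_le_L2_c:
  fixes g :: "real \<Rightarrow> complex"
  assumes [measurable]: "g \<in> borel_measurable borel" and \<delta>: "\<delta> > 0"
    and L2: "(\<integral>\<^sup>+x\<in>{-pi..pi}. ennreal ((cmod (g x))\<^sup>2) \<partial>lborel) \<le> ennreal \<delta>"
  shows "(\<integral>\<^sup>+x\<in>{-pi..pi}. ennreal (cmod (g x)) \<partial>lborel) \<le> ennreal ((pi + 1) * sqrt \<delta>)"
  using L1_le_L2[of "\<lambda>x. cmod (g x)" \<delta>] assms by simp

lemma cis_P_integral:
  fixes a :: "int \<Rightarrow> real"
  assumes "\<bar>h\<bar> \<le> int N"
  shows "(LINT x:{-pi..pi}|lborel. cis (real_of_int h * x) * P a N x) = complex_of_real (2 * pi * a (-h))"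
proof -
  have "((\<lambda>x. \<Sum>k\<in>{-int N..int N}. complex_of_real (a k) * cis (real_of_int (k + h) * x)) has_integral
      (\<Sum>k\<in>{-int N..int N}. complex_of_real (a k) * (if k + h = 0 then complex_of_real (2*pi) else 0))) {-pi..pi}"
    by (intro has_integral_sum has_integral_mult_right has_integral_cis) auto
  also have "(\<Sum>k\<in>{-int N..int N}. complex_of_real (a k) * (if k + h = 0 then complex_of_real (2*pi) else 0))
      = (\<Sum>k\<in>{-int N..int N}. if k = -h then complex_of_real (a k) * complex_of_real (2*pi) else 0)"
    by (intro sum.cong refl) auto
  also have "\<dots> = complex_of_real (2 * pi * a (-h))"
    using assms by (subst sum.delta) auto
  finally have HK: "((\<lambda>x. cis (real_of_int h * x) * P a N x) has_integral complex_of_real (2 * pi * a (-h))) {-pi..pi}"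
  proof (rule has_integral_eq[rotated])
    fix x
    show "(\<Sum>k\<in>{-int N..int N}. complex_of_real (a k) * cis (real_of_int (k + h) * x)) = cis (real_of_int h * x) * P a N x"
      unfolding P_def sum_distrib_left
    proof (intro sum.cong refl)
      fix k
      have "cis (real_of_int (k + h) * x) = cis (real_of_int h * x) * cis (real_of_int k * x)"
        by (simp add: cis_mult algebra_simps)
      then show "complex_of_real (a k) * cis (real_of_int (k + h) * x) = cis (real_of_int h * x) * (complex_of_real (a k) * cis (real_of_int k * x))"
        by (simp add: mult_ac)
    qed
  qed
  have si: "set_integrable lborel {-pi..pi} (\<lambda>x. cis (real_of_int h * x) * P a N x)"
    by (rule borel_integrable_atLeastAtMost') (intro continuous_intros continuous_on_subset[OF P_cont]; auto)
  show ?thesis using set_borel_integral_eq_integral(2)[OF si] HK by (simp add: integral_unique)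
qed

definition FB :: "(int \<Rightarrow> real) \<Rightarrow> (real \<Rightarrow> real) \<Rightarrow> bool" where
  "FB c f \<longleftrightarrow> (\<forall>a N B. (\<forall>K. K \<ge> N \<longrightarrow> 2 * pi * (\<Sum>h\<in>{-int K..int K}. (trunc N a h - c h / (2*pi))\<^sup>2) \<le> B) \<longrightarrow>
       (\<integral>\<^sup>+x\<in>{-pi..pi}. ennreal ((cmod (P a N x - complex_of_real (f x)))\<^sup>2) \<partial>lborel) \<le> ennreal B)"

lemma RF:
  fixes c :: "int \<Rightarrow> real"
  assumes even: "\<And>h. c (-h) = c h" and sq: "summable (\<lambda>n. (c (int n))\<^sup>2)"
  obtains f :: "real \<Rightarrow> real" where "f \<in> borel_measurable borel" "FB c f"
    "set_integrable lborel {-pi..pi} f"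
    "\<And>h. complex_of_real (c h) = (\<integral>x\<in>{-pi..pi}. cis (real_of_int h * x) * complex_of_real (f x) \<partial>lborel)"
    "(\<lambda>N. \<integral>\<^sup>+x\<in>{-pi..pi}. ennreal ((cmod (P (\<lambda>h. c h / (2*pi)) N x - complex_of_real (f x)))\<^sup>2) \<partial>lborel) \<longlonglongrightarrow> 0"
proof -
  obtain f where f_borel[measurable]: "f \<in> borel_measurable borel" and fb:
    "\<And>a N B. (\<And>K. K \<ge> N \<Longrightarrow> 2 * pi * (\<Sum>h\<in>{-int K..int K}. (trunc N a h - c h / (2*pi))\<^sup>2) \<le> B) \<Longrightarrow>
       (\<integral>\<^sup>+x\<in>{-pi..pi}. ennreal ((cmod (P a N x - complex_of_real (f x)))\<^sup>2) \<partial>lborel) \<le> ennreal B"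
    using RF_core[OF even sq] by blast
  have FBf: "FB c f" unfolding FB_def using fb by blast
  define cc where "cc h = c h / (2*pi)" for h
  have cc_even: "cc (-h) = cc h" for h by (simp add: cc_def even)
  define d where "d n = (cc (int n))\<^sup>2" for n
  have d_sum: "summable d"
    unfolding d_def cc_def using summable_mult[OF sq, of "(1/(2*pi))\<^sup>2"]
    by (simp add: power_divide field_simps)
  have d_nn: "0 \<le> d n" for n by (simp add: d_def)
  obtain tl where tl: "tl \<longlonglongrightarrow> 0" "\<And>N M. (\<Sum>n\<in>{N<..M}. d n) \<le> tl N" "\<And>N. 0 \<le> tl N"
    using tail_bound[OF d_sum d_nn] by blast
  have L2N: "(\<integral>\<^sup>+x\<in>{-pi..pi}. ennreal ((cmod (P cc N x - complex_of_real (f x)))\<^sup>2) \<partial>lborel) \<le> ennreal (4 * pi * tl N)" for N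
  proof (rule fb)
    fix K assume K: "K \<ge> N"
    have "(\<Sum>h\<in>{-int K..int K}. (trunc N cc h - c h / (2*pi))\<^sup>2) = 2 * (\<Sum>n\<in>{1..K}. (trunc N cc (int n) - cc (int n))\<^sup>2) + 0"
      using sum_trunc_even[where a=cc and b=cc and K=K and N=N] cc_even by (simp add: cc_def)
    also have "(\<Sum>n\<in>{1..K}. (trunc N cc (int n) - cc (int n))\<^sup>2) = (\<Sum>n\<in>{N<..K}. d n)"
      by (rule sum.mono_neutral_cong_right) (auto simp: trunc_def d_def)
    finally show "2 * pi * (\<Sum>h\<in>{-int K..int K}. (trunc N cc h - c h / (2*pi))\<^sup>2) \<le> 4 * pi * tl N"
      using tl(2)[of N K] by simp
  qed
  have conv: "(\<lambda>N. \<integral>\<^sup>+x\<in>{-pi..pi}. ennreal ((cmod (P cc N x - complex_of_real (f x)))\<^sup>2) \<partial>lborel) \<longlonglongrightarrow> 0"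
  proof (rule tendsto_sandwich[OF _ _ tendsto_const])
    show "\<forall>\<^sub>F N in sequentially. 0 \<le> (\<integral>\<^sup>+x\<in>{-pi..pi}. ennreal ((cmod (P cc N x - complex_of_real (f x)))\<^sup>2) \<partial>lborel)"
      by simp
    show "\<forall>\<^sub>F N in sequentially. (\<integral>\<^sup>+x\<in>{-pi..pi}. ennreal ((cmod (P cc N x - complex_of_real (f x)))\<^sup>2) \<partial>lborel) \<le> ennreal (4 * pi * tl N)"
      using L2N by simp
    have "(\<lambda>N. ennreal (4 * pi * tl N)) \<longlonglongrightarrow> ennreal (4 * pi * 0)"
      by (intro tendsto_ennrealI tendsto_intros tl(1))
    then show "(\<lambda>N. ennreal (4 * pi * tl N)) \<longlonglongrightarrow> 0" by simp
  qed
  define \<delta> where "\<delta> N = 4 * pi * tl N + 1 / (real N + 1)" for N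
  have \<delta>_pos: "\<delta> N > 0" for N unfolding \<delta>_def using tl(3)[of N] by (intro add_nonneg_pos) auto
  have \<delta>_lim: "\<delta> \<longlonglongrightarrow> 0"
  proof -
    have "(\<lambda>N. 1 / (real N + 1)) \<longlonglongrightarrow> 0" using LIMSEQ_inverse_real_of_nat by (simp add: divide_inverse add.commute)
    then have "\<delta> \<longlonglongrightarrow> 4 * pi * 0 + 0" unfolding \<delta>_def by (intro tendsto_intros tl(1))
    then show ?thesis by simp
  qed
  have L1N: "(\<integral>\<^sup>+x\<in>{-pi..pi}. ennreal (cmod (P cc N x - complex_of_real (f x))) \<partial>lborel) \<le> ennreal ((pi + 1) * sqrt (\<delta> N))" for N
  proof (rule L1_le_L2_c[OF _ \<delta>_pos])
    show "(\<integral>\<^sup>+x\<in>{-pi..pi}. ennreal ((cmod (P cc N x - complex_of_real (f x)))\<^sup>2) \<partial>lborel) \<le> ennreal (\<delta> N)"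
      using L2N[of N] by (rule order_trans) (auto simp: \<delta>_def intro!: ennreal_leI)
  qed measurable
  have Pint: "(\<integral>\<^sup>+x\<in>{-pi..pi}. ennreal (cmod (P cc 0 x)) \<partial>lborel) < \<infinity>"
  proof -
    have "set_integrable lborel {-pi..pi} (P cc 0)"
      by (rule borel_integrable_atLeastAtMost') (rule continuous_on_subset[OF P_cont], auto)
    then have "integrable lborel (\<lambda>x. indicator {-pi..pi} x *\<^sub>R P cc 0 x)" unfolding set_integrable_def .
    then have "(\<integral>\<^sup>+x. ennreal (norm (indicator {-pi..pi} x *\<^sub>R P cc 0 x)) \<partial>lborel) < \<infinity>"
      by (simp add: integrable_iff_bounded)
    moreover have "(\<integral>\<^sup>+x. ennreal (norm (indicator {-pi..pi} x *\<^sub>R P cc 0 x)) \<partial>lborel) = (\<integral>\<^sup>+x\<in>{-pi..pi}. ennreal (cmod (P cc 0 x)) \<partial>lborel)"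
      by (intro nn_integral_cong) (auto split: split_indicator)
    ultimately show ?thesis by simp
  qed
  have f_int: "set_integrable lborel {-pi..pi} f"
    unfolding set_integrable_def
  proof (rule integrableI_bounded)
    show "(\<lambda>x. indicator {-pi..pi} x *\<^sub>R f x) \<in> borel_measurable lborel" by measurable
    have "(\<integral>\<^sup>+x. ennreal (norm (indicator {-pi..pi} x *\<^sub>R f x)) \<partial>lborel) \<le>
        (\<integral>\<^sup>+x. ennreal (cmod (P cc 0 x - complex_of_real (f x))) * indicator {-pi..pi} x + ennreal (cmod (P cc 0 x)) * indicator {-pi..pi} x \<partial>lborel)"
    proof (intro nn_integral_mono)
      fix x
      have "\<bar>f x\<bar> \<le> cmod (P cc 0 x - complex_of_real (f x)) + cmod (P cc 0 x)"
      proof -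
        have "\<bar>f x\<bar> = cmod ((complex_of_real (f x) - P cc 0 x) + P cc 0 x)" by simp
        also have "\<dots> \<le> cmod (complex_of_real (f x) - P cc 0 x) + cmod (P cc 0 x)" by (rule norm_triangle_ineq)
        finally show ?thesis by (simp add: norm_minus_commute)
      qed
      then have "ennreal \<bar>f x\<bar> \<le> ennreal (cmod (P cc 0 x - complex_of_real (f x))) + ennreal (cmod (P cc 0 x))"
        by (simp add: ennreal_plus[symmetric] del: ennreal_plus)
      then show "ennreal (norm (indicator {-pi..pi} x *\<^sub>R f x)) \<le>
        ennreal (cmod (P cc 0 x - complex_of_real (f x))) * indicator {-pi..pi} x + ennreal (cmod (P cc 0 x)) * indicator {-pi..pi} x"
        by (auto split: split_indicator)
    qed
    also have "\<dots> = (\<integral>\<^sup>+x\<in>{-pi..pi}. ennreal (cmod (P cc 0 x - complex_of_real (f x))) \<partial>lborel) + (\<integral>\<^sup>+x\<in>{-pi..pi}. ennreal (cmod (P cc 0 x)) \<partial>lborel)"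
      by (rule nn_integral_add) auto
    also have "\<dots> < \<infinity>"
    proof -
      have "(\<integral>\<^sup>+x\<in>{-pi..pi}. ennreal (cmod (P cc 0 x - complex_of_real (f x))) \<partial>lborel) < \<infinity>"
        using L1N[of 0] by (rule order.strict_trans1) simp
      then show ?thesis using Pint by simp
    qed
    finally show "(\<integral>\<^sup>+x. ennreal (norm (indicator {-pi..pi} x *\<^sub>R f x)) \<partial>lborel) < \<infinity>" .
  qed
  have coef: "complex_of_real (c h) = (\<integral>x\<in>{-pi..pi}. cis (real_of_int h * x) * complex_of_real (f x) \<partial>lborel)" for h
  proof -
    define z where "z = (\<integral>x\<in>{-pi..pi}. cis (real_of_int h * x) * complex_of_real (f x) \<partial>lborel) - complex_of_real (c h)"
    have cf_int: "set_integrable lborel {-pi..pi} (\<lambda>x. cis (real_of_int h * x) * complex_of_real (f x))"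
    proof -
      have "set_integrable lborel {-pi..pi} (\<lambda>x. complex_of_real (f x))"
      proof -
        have "integrable lborel (\<lambda>x. complex_of_real (indicator {-pi..pi} x *\<^sub>R f x))"
          by (rule integrable_of_real) (use f_int in \<open>simp add: set_integrable_def\<close>)
        moreover have "(\<lambda>x. indicator {-pi..pi} x *\<^sub>R complex_of_real (f x)) = (\<lambda>x. complex_of_real (indicator {-pi..pi} x *\<^sub>R f x))"
          by (auto simp: fun_eq_iff split: split_indicator)
        ultimately show ?thesis unfolding set_integrable_def by simp
      qed
      then show ?thesis
      proof (rule set_integrable_bound[where f="\<lambda>x. complex_of_real (f x)"])
        show "set_borel_measurable lborel {-pi..pi} (\<lambda>x. cis (real_of_int h * x) * complex_of_real (f x))"
          unfolding set_borel_measurable_def by measurable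
      qed (auto simp: norm_mult)
    qed
    have bnd: "norm z \<le> (pi + 1) * sqrt (\<delta> N)" if N: "\<bar>h\<bar> \<le> int N" for N
    proof -
      have Pi: "set_integrable lborel {-pi..pi} (\<lambda>x. cis (real_of_int h * x) * P cc N x)"
        by (rule borel_integrable_atLeastAtMost') (intro continuous_intros continuous_on_subset[OF P_cont]; auto)
      have "(LINT x:{-pi..pi}|lborel. cis (real_of_int h * x) * P cc N x) = complex_of_real (2 * pi * cc (-h))"
        by (rule cis_P_integral[OF N])
      also have "\<dots> = complex_of_real (c h)" by (simp add: cc_def even)
      finally have eq: "z = (LINT x:{-pi..pi}|lborel. cis (real_of_int h * x) * complex_of_real (f x) - cis (real_of_int h * x) * P cc N x)"
        unfolding z_def by (simp add: set_integral_diff(2)[OF cf_int Pi])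
      have "norm z \<le> (LINT x:{-pi..pi}|lborel. norm (cis (real_of_int h * x) * complex_of_real (f x) - cis (real_of_int h * x) * P cc N x))"
        unfolding eq by (rule set_integral_norm_bound) (intro set_integral_diff(1) cf_int Pi)
      also have "\<dots> = (LINT x:{-pi..pi}|lborel. cmod (P cc N x - complex_of_real (f x)))"
      proof -
        have pw: "norm (cis (real_of_int h * x) * complex_of_real (f x) - cis (real_of_int h * x) * P cc N x) = cmod (P cc N x - complex_of_real (f x))" for x
        proof -
          have "cis (real_of_int h * x) * complex_of_real (f x) - cis (real_of_int h * x) * P cc N x = cis (real_of_int h * x) * (complex_of_real (f x) - P cc N x)"
            by (simp add: algebra_simps)
          then show ?thesis by (simp add: norm_mult norm_minus_commute)
        qed
        show ?thesis by (intro set_lebesgue_integral_cong) (auto simp: pw)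
      qed
      also have "\<dots> = enn2real (\<integral>\<^sup>+x\<in>{-pi..pi}. ennreal (cmod (P cc N x - complex_of_real (f x))) \<partial>lborel)"
        unfolding set_lebesgue_integral_def
        by (subst integral_eq_nn_integral) (auto intro!: arg_cong[where f=enn2real] nn_integral_cong split: split_indicator)
      also have "\<dots> \<le> (pi + 1) * sqrt (\<delta> N)"
        using L1N[of N] \<delta>_pos[of N] pi_gt_zero by (intro enn2real_leI) auto
      finally show ?thesis .
    qed
    have "norm z \<le> 0"
    proof (rule tendsto_le[OF trivial_limit_sequentially])
      show "(\<lambda>N. (pi + 1) * sqrt (\<delta> N)) \<longlonglongrightarrow> 0"
        using tendsto_mult[OF tendsto_const tendsto_real_sqrt[OF \<delta>_lim], of "pi + 1"] by simp
      show "(\<lambda>N. norm z) \<longlonglongrightarrow> norm z" by simp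
      show "\<forall>\<^sub>F N in sequentially. norm z \<le> (pi + 1) * sqrt (\<delta> N)"
        using bnd by (auto simp: eventually_sequentially intro!: exI[of _ "nat \<bar>h\<bar>"])
    qed
    then show ?thesis unfolding z_def by simp
  qed
  show ?thesis
  proof (rule that[OF f_borel FBf f_int coef])
    have "cc = (\<lambda>h. c h / (2*pi))" by (simp add: fun_eq_iff cc_def)
    then show "(\<lambda>N. \<integral>\<^sup>+x\<in>{-pi..pi}. ennreal ((cmod (P (\<lambda>h. c h / (2*pi)) N x - complex_of_real (f x)))\<^sup>2) \<partial>lborel) \<longlonglongrightarrow> 0"
      using conv by simp
  qed
qed


lemma double_sum_diff:
  fixes F :: "int \<Rightarrow> complex"
  shows "(\<Sum>a<N. \<Sum>b<N. F (int a - int b)) = (\<Sum>h\<in>{-int N..int N}. of_int (int N - \<bar>h\<bar>) * F h)"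
proof (induction N)
  case 0
  then show ?case by simp
next
  case (Suc N)
  have p1: "(\<Sum>b<N. F (int N - int b)) = (\<Sum>h\<in>{1..int N}. F h)"
    by (rule sum.reindex_bij_witness[where i="\<lambda>h. nat (int N - h)" and j="\<lambda>b. int N - int b"]) auto
  have p2: "(\<Sum>a<N. F (int a - int N)) = (\<Sum>h\<in>{-int N..-1}. F h)"
    by (rule sum.reindex_bij_witness[where i="\<lambda>h. nat (h + int N)" and j="\<lambda>a. int a - int N"]) auto
  have split: "{-int N..int N} = {-int N..-1} \<union> ({0} \<union> {1..int N})" by auto
  have allF: "(\<Sum>h\<in>{-int N..int N}. F h) = (\<Sum>h\<in>{-int N..-1}. F h) + (F 0 + (\<Sum>h\<in>{1..int N}. F h))"
    unfolding split by (subst sum.union_disjoint; simp)+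
  have "(\<Sum>a<Suc N. \<Sum>b<Suc N. F (int a - int b)) =
      (\<Sum>a<N. \<Sum>b<N. F (int a - int b)) + (\<Sum>a<N. F (int a - int N)) + ((\<Sum>b<N. F (int N - int b)) + F 0)"
    by (simp add: sum.distrib algebra_simps)
  also have "\<dots> = (\<Sum>h\<in>{-int N..int N}. of_int (int N - \<bar>h\<bar>) * F h) + (\<Sum>h\<in>{-int N..int N}. F h)"
    using Suc.IH p1 p2 allF by (simp add: algebra_simps)
  also have "\<dots> = (\<Sum>h\<in>{-int N..int N}. of_int (int (Suc N) - \<bar>h\<bar>) * F h)"
    by (simp add: sum.distrib[symmetric] algebra_simps)
  also have "\<dots> = (\<Sum>h\<in>{-int (Suc N)..int (Suc N)}. of_int (int (Suc N) - \<bar>h\<bar>) * F h)"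
  proof (rule sum.mono_neutral_left)
    have z: "int (Suc N) - \<bar>h\<bar> = 0" if "h \<in> {-int (Suc N)..int (Suc N)} - {-int N..int N}" for h
      using that by auto
    show "\<forall>i\<in>{-int (Suc N)..int (Suc N)} - {-int N..int N}. of_int (int (Suc N) - \<bar>i\<bar>) * F i = 0"
      using z by (metis mult_zero_left of_int_0)
  qed auto
  finally show ?case .
qed

lemma RF_pos:
  fixes c :: "int \<Rightarrow> real" and f :: "real \<Rightarrow> real"
  assumes even: "\<And>h. c (-h) = c h" and sq: "summable (\<lambda>n. (c (int n))\<^sup>2)"
    and fb: "FB c f" and f_borel[measurable]: "f \<in> borel_measurable borel"
    and PD: "\<And>N x. 0 \<le> Re (\<Sum>a<N. \<Sum>b<N. complex_of_real (c (int a - int b)) * cis (real_of_int (int a - int b) * x))"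
  shows "AE x in lborel. x \<in> {-pi..pi} \<longrightarrow> 0 \<le> f x"
proof -
  define cc where "cc h = c h / (2*pi)" for h
  define d where "d n = (cc (int n))\<^sup>2" for n
  have d_sum: "summable d"
    unfolding d_def cc_def using summable_mult[OF sq, of "(1/(2*pi))\<^sup>2"]
    by (simp add: power_divide field_simps)
  have d_nn: "0 \<le> d n" for n by (simp add: d_def)
  define fej where "fej N h = cc h * (1 - real_of_int \<bar>h\<bar> / real N)" for N h
  have fej_even: "fej N (-h) = fej N h" for N h by (simp add: fej_def cc_def even)
  define g where "g N n = d n * min 1 ((real n / real N)\<^sup>2)" for N n
  have g_nn: "0 \<le> g N n" for N n by (simp add: g_def d_nn)
  have g_le: "g N n \<le> d n" for N n using d_nn[of n] by (simp add: g_def mult_left_le)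
  have g_lim: "(\<lambda>N. g N n) \<longlonglongrightarrow> 0" for n
  proof -
    have "(\<lambda>N. real n / real N) \<longlonglongrightarrow> 0" by (rule lim_const_over_n)
    then have "(\<lambda>N. d n * min 1 ((real n / real N)\<^sup>2)) \<longlonglongrightarrow> d n * min 1 (0\<^sup>2)"
      by (intro tendsto_intros)
    then show ?thesis by (simp add: g_def)
  qed
  note D = dom_series[OF d_sum, of g, OF g_nn g_le g_lim]
  define e where "e N = (\<Sum>n. g N n)" for N
  have e_lim: "e \<longlonglongrightarrow> 0" unfolding e_def by (rule D(1))
  \<comment> \<open>Fejer kernel representation\<close>
  have Pfej: "P (fej N) N x = (\<Sum>a<N. \<Sum>b<N. complex_of_real (c (int a - int b)) * cis (real_of_int (int a - int b) * x)) / complex_of_real (2 * pi * real N)"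
    if "N \<ge> 1" for N x
  proof -
    have "(\<Sum>a<N. \<Sum>b<N. complex_of_real (c (int a - int b)) * cis (real_of_int (int a - int b) * x))
        = (\<Sum>h\<in>{-int N..int N}. of_int (int N - \<bar>h\<bar>) * (complex_of_real (c h) * cis (real_of_int h * x)))"
      by (rule double_sum_diff)
    also have "\<dots> = complex_of_real (2 * pi * real N) * P (fej N) N x"
      unfolding P_def sum_distrib_left
    proof (intro sum.cong refl)
      fix h
      have ab: "complex_of_real \<bar>real_of_int h\<bar> = complex_of_int \<bar>h\<bar>"
        by (metis of_int_abs of_real_of_int_eq)
      have "of_int (int N - \<bar>h\<bar>) * complex_of_real (c h) = complex_of_real (2 * pi * real N) * complex_of_real (fej N h)"
        using that pi_gt_zero by (simp add: fej_def cc_def field_simps ab)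
      then show "of_int (int N - \<bar>h\<bar>) * (complex_of_real (c h) * cis (real_of_int h * x)) =
          complex_of_real (2 * pi * real N) * (complex_of_real (fej N h) * cis (real_of_int h * x))"
        by (metis mult.assoc)
    qed
    finally show ?thesis using that pi_gt_zero by (simp add: field_simps)
  qed
  have Pfej_nn: "P (fej N) N x = complex_of_real (Re (P (fej N) N x)) \<and> 0 \<le> Re (P (fej N) N x)" if "N \<ge> 1" for N x
  proof
    show "P (fej N) N x = complex_of_real (Re (P (fej N) N x))" by (rule P_real) (rule fej_even)
    have "Re (P (fej N) N x) = Re (\<Sum>a<N. \<Sum>b<N. complex_of_real (c (int a - int b)) * cis (real_of_int (int a - int b) * x)) / (2 * pi * real N)"
      unfolding Pfej[OF that] by (simp add: Re_divide_of_real)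
    then show "0 \<le> Re (P (fej N) N x)" using PD[where N=N and x=x] that pi_gt_zero by simp
  qed
  have bound: "(\<integral>\<^sup>+x\<in>{-pi..pi}. ennreal ((cmod (P (fej N) N x - complex_of_real (f x)))\<^sup>2) \<partial>lborel) \<le> ennreal (4 * pi * e N)"
    if N: "N \<ge> 1" for N
  proof -
    have "\<forall>a N B. (\<forall>K. K \<ge> N \<longrightarrow> 2 * pi * (\<Sum>h\<in>{-int K..int K}. (trunc N a h - c h / (2*pi))\<^sup>2) \<le> B) \<longrightarrow>
       (\<integral>\<^sup>+x\<in>{-pi..pi}. ennreal ((cmod (P a N x - complex_of_real (f x)))\<^sup>2) \<partial>lborel) \<le> ennreal B"
      using fb unfolding FB_def .
    then show ?thesis
    proof (elim allE impE)
      show "\<forall>K. K \<ge> N \<longrightarrow> 2 * pi * (\<Sum>h\<in>{-int K..int K}. (trunc N (fej N) h - c h / (2*pi))\<^sup>2) \<le> 4 * pi * e N"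
      proof (intro allI impI)
        fix K assume K: "K \<ge> N"
        have cc_even: "cc (-h) = cc h" for h by (simp add: cc_def even)
        have "(\<Sum>h\<in>{-int K..int K}. (trunc N (fej N) h - c h / (2*pi))\<^sup>2) = 2 * (\<Sum>n\<in>{1..K}. (trunc N (fej N) (int n) - cc (int n))\<^sup>2) + 0"
          using sum_trunc_even[where a="fej N" and b=cc and K=K and N=N] fej_even cc_even
          by (simp add: cc_def fej_def)
        also have "(\<Sum>n\<in>{1..K}. (trunc N (fej N) (int n) - cc (int n))\<^sup>2) = (\<Sum>n\<in>{1..K}. g N n)"
        proof (intro sum.cong refl)
          fix n assume "n \<in> {1..K}"
          show "(trunc N (fej N) (int n) - cc (int n))\<^sup>2 = g N n"
          proof (cases "n \<le> N")
            case True
            then have "(real n / real N)\<^sup>2 \<le> 1" using N by (simp add: power_le_one)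
            then show ?thesis using True N
              by (simp add: trunc_def fej_def g_def d_def power2_eq_square field_simps)
          next
            case False
            then have "(real n / real N)\<^sup>2 \<ge> 1" using N by (simp add: field_simps)
            then show ?thesis using False by (simp add: trunc_def g_def d_def min_def)
          qed
        qed
        also have "(\<Sum>n\<in>{1..K}. g N n) \<le> e N"
          unfolding e_def by (rule sum_le_suminf) (use D(2) g_nn in auto)
        finally show "2 * pi * (\<Sum>h\<in>{-int K..int K}. (trunc N (fej N) h - c h / (2*pi))\<^sup>2) \<le> 4 * pi * e N"
          using pi_gt_zero by simp
      qed
    qed
  qed
  define Q where "Q = (\<integral>\<^sup>+x\<in>{-pi..pi}. ennreal ((max (- f x) 0)\<^sup>2) \<partial>lborel)"
  have Q_le: "Q \<le> ennreal (4 * pi * e N)" if "N \<ge> 1" for N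
  proof -
    have "Q \<le> (\<integral>\<^sup>+x\<in>{-pi..pi}. ennreal ((cmod (P (fej N) N x - complex_of_real (f x)))\<^sup>2) \<partial>lborel)"
      unfolding Q_def
    proof (intro nn_integral_mono)
      fix x
      define t where "t = Re (P (fej N) N x)"
      have t: "P (fej N) N x = complex_of_real t" "0 \<le> t" using Pfej_nn[OF that, of x] by (auto simp: t_def)
      have "(max (- f x) 0)\<^sup>2 \<le> (t - f x)\<^sup>2"
      proof (cases "f x \<ge> 0")
        case True then show ?thesis by simp
      next
        case False
        then have "max (- f x) 0 = - f x" "0 \<le> - f x" "- f x \<le> t - f x" using t(2) by auto
        then show ?thesis by (metis power_mono)
      qed
      then show "ennreal ((max (- f x) 0)\<^sup>2) * indicator {-pi..pi} x \<le> ennreal ((cmod (P (fej N) N x - complex_of_real (f x)))\<^sup>2) * indicator {-pi..pi} x"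
        using t(1) by (auto intro!: ennreal_leI split: split_indicator)
    qed
    also have "\<dots> \<le> ennreal (4 * pi * e N)" by (rule bound[OF that])
    finally show ?thesis .
  qed
  have "Q \<le> 0"
  proof (rule tendsto_le[OF trivial_limit_sequentially])
    have "(\<lambda>N. ennreal (4 * pi * e N)) \<longlonglongrightarrow> ennreal (4 * pi * 0)"
      by (intro tendsto_ennrealI tendsto_intros e_lim)
    then show "(\<lambda>N. ennreal (4 * pi * e N)) \<longlonglongrightarrow> 0" by simp
    show "(\<lambda>N. Q) \<longlonglongrightarrow> Q" by simp
    show "\<forall>\<^sub>F N in sequentially. Q \<le> ennreal (4 * pi * e N)"
      using Q_le by (auto simp: eventually_sequentially intro!: exI[of _ 1])
  qed
  then have "Q = 0" by simp
  then have "AE x in lborel. ennreal ((max (- f x) 0)\<^sup>2) * indicator {-pi..pi} x = 0"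
    unfolding Q_def by (subst (asm) nn_integral_0_iff_AE) auto
  then show ?thesis
    by eventually_elim (auto split: split_indicator if_splits simp: max_def)
qed


lemma pmf_summable_norm:
  fixes g :: "nat \<Rightarrow> complex"
  assumes "\<And>k. cmod (g k) \<le> 1"
  shows "summable (\<lambda>k. cmod (complex_of_real (pmf p k) * g k))"
  using pmf_expect_nat(2)[of g 1 p] assms by (simp add: scaleR_conv_of_real)

lemma char_pow:
  "char_fun_S S \<theta> ^ n = (\<Sum>k. complex_of_real (pmf (walk_law S n) k) * cis (real k * \<theta>))"
proof (induction n)
  case 0
  have "(\<Sum>k. complex_of_real (pmf (walk_law S 0) k) * cis (real k * \<theta>)) = (\<Sum>k. if k = 0 then 1 else 0)"
    by (intro suminf_cong) (simp add: pmf_return)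
  also have "\<dots> = 1" by (subst suminf_finite[of "{0}"]) auto
  finally show ?case by simp
next
  case (Suc n)
  let ?a = "\<lambda>k. complex_of_real (pmf S k) * cis (real k * \<theta>)"
  let ?b = "\<lambda>k. complex_of_real (pmf (walk_law S n) k) * cis (real k * \<theta>)"
  have "char_fun_S S \<theta> ^ Suc n = (\<Sum>k. ?a k) * (\<Sum>k. ?b k)"
    using Suc by (simp add: char_fun_S_def)
  also have "\<dots> = (\<Sum>k. \<Sum>i\<le>k. ?a i * ?b (k - i))"
    by (rule Cauchy_product; rule pmf_summable_norm) simp_all
  also have "\<dots> = (\<Sum>k. complex_of_real (pmf (walk_law S (Suc n)) k) * cis (real k * \<theta>))"
  proof (intro suminf_cong)
    fix k
    have "(\<Sum>i\<le>k. ?a i * ?b (k - i)) = (\<Sum>i\<le>k. complex_of_real (pmf S i * pmf (walk_law S n) (k - i)) * cis (real k * \<theta>))"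
    proof (intro sum.cong refl)
      fix i assume "i \<in> {..k}"
      then have "cis (real i * \<theta>) * cis (real (k - i) * \<theta>) = cis (real k * \<theta>)"
        by (simp add: cis_mult of_nat_diff algebra_simps)
      then show "?a i * ?b (k - i) = complex_of_real (pmf S i * pmf (walk_law S n) (k - i)) * cis (real k * \<theta>)"
        by (simp add: mult_ac)
    qed
    also have "\<dots> = complex_of_real (pmf (walk_law S (Suc n)) k) * cis (real k * \<theta>)"
      by (simp add: pmf_walk_Suc sum_distrib_right)
    finally show "(\<Sum>i\<le>k. ?a i * ?b (k - i)) = complex_of_real (pmf (walk_law S (Suc n)) k) * cis (real k * \<theta>)" .
  qed
  finally show ?case .
qed

lemma sampled_spec:
  fixes \<sigma> :: "int \<Rightarrow> real" and fX :: "real \<Rightarrow> real"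
  assumes sd: "spectral_density \<sigma> fX" and bnd: "\<And>h. \<bar>\<sigma> h\<bar> \<le> B"
  shows "complex_of_real (sampled_cov \<sigma> S j) = (\<integral>\<theta>\<in>{-pi..pi}. char_fun_S S \<theta> ^ nat \<bar>j\<bar> * complex_of_real (fX \<theta>) \<partial>lborel)"
proof -
  have fX_int: "set_integrable lborel {-pi..pi} fX" and coef: "\<And>h. complex_of_real (\<sigma> h) =
         (\<integral>x\<in>{-pi..pi}. cis (real_of_int h * x) * complex_of_real (fX x) \<partial>lborel)"
    using sd by (auto simp: spectral_density_def)
  have fX_borel[measurable]: "(\<lambda>x. indicator {-pi..pi} x *\<^sub>R fX x) \<in> borel_measurable lborel"
    using fX_int unfolding set_integrable_def by auto
  show ?thesis
  proof (cases "j = 0")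
    case True
    then show ?thesis using coef[of 0] by (simp add: sampled_cov_def)
  next
    case False
    define n where "n = nat \<bar>j\<bar>"
    have n: "n \<ge> 1" using False by (simp add: n_def)
    let ?p = "\<lambda>k. pmf (walk_law S n) k"
    define F where "F k x = indicator {-pi..pi} x *\<^sub>R (complex_of_real (?p k) * cis (real k * x) * complex_of_real (fX x))" for k x
    have F_alt: "F k x = complex_of_real (?p k) * (cis (real k * x) * complex_of_real (indicator {-pi..pi} x *\<^sub>R fX x))" for k x
      by (simp add: F_def split: split_indicator)
    have intfX: "integrable lborel (\<lambda>x. indicator {-pi..pi} x *\<^sub>R fX x)"
      using fX_int unfolding set_integrable_def .
    have intc: "integrable lborel (\<lambda>x. cis (real k * x) * complex_of_real (indicator {-pi..pi} x *\<^sub>R fX x))" for k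
    proof (rule Bochner_Integration.integrable_bound[where f="\<lambda>x. indicator {-pi..pi} x *\<^sub>R fX x"])
      show "(\<lambda>x. cis (real k * x) * complex_of_real (indicator {-pi..pi} x *\<^sub>R fX x)) \<in> borel_measurable lborel"
        by measurable
    qed (use intfX in \<open>auto simp: norm_mult\<close>)
    have Fint: "integrable lborel (F k)" for k
      unfolding F_alt by (intro integrable_mult_right intc)
    have nF: "norm (F k x) = ?p k * norm (indicator {-pi..pi} x *\<^sub>R fX x)" for k x
      by (simp add: F_alt norm_mult split: split_indicator)
    have ps: "summable ?p"
      using pmf_expect_nat(2)[of "\<lambda>_. 1::real" 1 "walk_law S n"] by simp
    have "(\<integral>\<theta>\<in>{-pi..pi}. char_fun_S S \<theta> ^ n * complex_of_real (fX \<theta>) \<partial>lborel) = (\<integral>x. (\<Sum>k. F k x) \<partial>lborel)"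
      unfolding set_lebesgue_integral_def char_pow F_def
    proof (intro Bochner_Integration.integral_cong refl)
      fix x
      have sm: "summable (\<lambda>k. complex_of_real (?p k) * cis (real k * x))"
        by (rule summable_norm_cancel, rule pmf_summable_norm) simp
      show "indicator {-pi..pi} x *\<^sub>R ((\<Sum>k. complex_of_real (?p k) * cis (real k * x)) * complex_of_real (fX x)) =
         (\<Sum>k. indicator {-pi..pi} x *\<^sub>R (complex_of_real (?p k) * cis (real k * x) * complex_of_real (fX x)))"
        using sm by (cases "x \<in> {-pi..pi}") (simp_all add: suminf_mult2)
    qed
    also have "\<dots> = (\<Sum>k. integral\<^sup>L lborel (F k))"
    proof (rule integral_suminf)
      show "integrable lborel (F k)" for k by (rule Fint)
      show "AE x in lborel. summable (\<lambda>k. norm (F k x))"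
        unfolding nF by (intro AE_I2 summable_mult2 ps)
      show "summable (\<lambda>k. LINT x|lborel. norm (F k x))"
        unfolding nF by (simp add: summable_mult2 ps)
    qed
    also have "\<dots> = (\<Sum>k. complex_of_real (?p k) * complex_of_real (\<sigma> (int k)))"
    proof (intro suminf_cong)
      fix k
      have "integral\<^sup>L lborel (F k) = complex_of_real (?p k) * (LINT x:{-pi..pi}|lborel. cis (real_of_int (int k) * x) * complex_of_real (fX x))"
        unfolding F_alt set_lebesgue_integral_def
        by (subst integral_mult_right_zero) (auto intro!: arg_cong[where f="\<lambda>z. _ * z"] Bochner_Integration.integral_cong split: split_indicator)
      also have "\<dots> = complex_of_real (?p k) * complex_of_real (\<sigma> (int k))" by (simp add: coef)
      finally show "integral\<^sup>L lborel (F k) = complex_of_real (?p k) * complex_of_real (\<sigma> (int k))" .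
    qed
    also have "\<dots> = complex_of_real (\<Sum>k. ?p k * \<sigma> (int k))"
    proof -
      have "summable (\<lambda>k. ?p k * \<sigma> (int k))"
        using pmf_expect_nat(2)[of "\<lambda>k. \<sigma> (int k)" B "walk_law S n"] bnd
        by (auto intro: summable_norm_cancel)
      then show ?thesis by (simp add: suminf_of_real[symmetric] of_real_mult[symmetric] del: of_real_mult)
    qed
    also have "(\<Sum>k. ?p k * \<sigma> (int k)) = sampled_cov \<sigma> S j"
      using pmf_expect_nat(1)[of "\<lambda>k. \<sigma> (int k)" B "walk_law S n"] bnd False
      by (simp add: sampled_cov_def n_def)
    finally show ?thesis by (simp add: n_def)
  qed
qed


lemma sos_facts:
  fixes M :: "'a measure" and X :: "nat \<Rightarrow> 'a \<Rightarrow> real"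
  assumes sos: "second_order_stationary M X"
  shows "\<And>h. \<bar>autocov M X h\<bar> \<le> autocov M X 0"
    and "\<And>N x. 0 \<le> Re (\<Sum>a<N. \<Sum>b<N. complex_of_real (autocov M X (int a - int b)) * cis (real_of_int (int a - int b) * x))"
proof -
  interpret prob_space M using sos by (simp add: second_order_stationary_def)
  define Y where "Y n \<omega> = X n \<omega> - integral\<^sup>L M (X n)" for n \<omega>
  have Xm[measurable]: "X n \<in> borel_measurable M" for n using sos by (simp add: second_order_stationary_def)
  have X2: "integrable M (\<lambda>\<omega>. (X n \<omega>)\<^sup>2)" for n using sos by (simp add: second_order_stationary_def)
  have stat: "integral\<^sup>L M (\<lambda>\<omega>. Y m \<omega> * Y (m + h) \<omega>) = integral\<^sup>L M (\<lambda>\<omega>. Y 0 \<omega> * Y h \<omega>)" for m h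
    using sos by (simp add: second_order_stationary_def Y_def)
  have X1: "integrable M (X n)" for n
    by (rule square_integrable_imp_integrable[OF Xm X2])
  have Ym[measurable]: "Y n \<in> borel_measurable M" for n unfolding Y_def by measurable
  have Y2: "integrable M (\<lambda>\<omega>. (Y n \<omega>)\<^sup>2)" for n
  proof -
    have "(\<lambda>\<omega>. (Y n \<omega>)\<^sup>2) = (\<lambda>\<omega>. (X n \<omega>)\<^sup>2 - 2 * integral\<^sup>L M (X n) * X n \<omega> + (integral\<^sup>L M (X n))\<^sup>2)"
      by (auto simp: Y_def power2_eq_square algebra_simps fun_eq_iff)
    then show ?thesis using X1 X2 by simp
  qed
  have YY: "integrable M (\<lambda>\<omega>. Y a \<omega> * Y b \<omega>)" for a b
  proof (rule Bochner_Integration.integrable_bound[where f="\<lambda>\<omega>. ((Y a \<omega>)\<^sup>2 + (Y b \<omega>)\<^sup>2) / 2"])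
    show "integrable M (\<lambda>\<omega>. ((Y a \<omega>)\<^sup>2 + (Y b \<omega>)\<^sup>2) / 2)" using Y2 by simp
    show "AE \<omega> in M. norm (Y a \<omega> * Y b \<omega>) \<le> norm (((Y a \<omega>)\<^sup>2 + (Y b \<omega>)\<^sup>2) / 2)"
    proof (intro AE_I2)
      fix \<omega>
      have "0 \<le> (\<bar>Y a \<omega>\<bar> - \<bar>Y b \<omega>\<bar>)\<^sup>2" by simp
      then show "norm (Y a \<omega> * Y b \<omega>) \<le> norm (((Y a \<omega>)\<^sup>2 + (Y b \<omega>)\<^sup>2) / 2)"
        by (simp add: power2_eq_square abs_mult algebra_simps)
    qed
  qed measurable
  have cov: "autocov M X (int a - int b) = integral\<^sup>L M (\<lambda>\<omega>. Y a \<omega> * Y b \<omega>)" for a b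
  proof (cases "b \<le> a")
    case True
    have "autocov M X (int a - int b) = integral\<^sup>L M (\<lambda>\<omega>. Y 0 \<omega> * Y (a - b) \<omega>)"
      using True by (simp add: autocov_def Y_def nat_diff_distrib')
    also have "\<dots> = integral\<^sup>L M (\<lambda>\<omega>. Y b \<omega> * Y (b + (a - b)) \<omega>)" by (rule stat[symmetric])
    also have "\<dots> = integral\<^sup>L M (\<lambda>\<omega>. Y a \<omega> * Y b \<omega>)" using True by (simp add: mult.commute)
    finally show ?thesis .
  next
    case False
    have "autocov M X (int a - int b) = integral\<^sup>L M (\<lambda>\<omega>. Y 0 \<omega> * Y (b - a) \<omega>)"
      using False by (simp add: autocov_def Y_def nat_diff_distrib')
    also have "\<dots> = integral\<^sup>L M (\<lambda>\<omega>. Y a \<omega> * Y (a + (b - a)) \<omega>)" by (rule stat[symmetric])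
    also have "\<dots> = integral\<^sup>L M (\<lambda>\<omega>. Y a \<omega> * Y b \<omega>)" using False by simp
    finally show ?thesis .
  qed
  show "\<bar>autocov M X h\<bar> \<le> autocov M X 0" for h
  proof -
    define k where "k = nat \<bar>h\<bar>"
    have "autocov M X h = integral\<^sup>L M (\<lambda>\<omega>. Y 0 \<omega> * Y k \<omega>)"
      by (simp add: autocov_def Y_def k_def)
    also have "\<bar>\<dots>\<bar> \<le> integral\<^sup>L M (\<lambda>\<omega>. ((Y 0 \<omega>)\<^sup>2 + (Y k \<omega>)\<^sup>2) / 2)"
    proof -
      have "\<bar>integral\<^sup>L M (\<lambda>\<omega>. Y 0 \<omega> * Y k \<omega>)\<bar> \<le> integral\<^sup>L M (\<lambda>\<omega>. \<bar>Y 0 \<omega> * Y k \<omega>\<bar>)"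
        by (rule integral_abs_bound)
      also have "\<dots> \<le> integral\<^sup>L M (\<lambda>\<omega>. ((Y 0 \<omega>)\<^sup>2 + (Y k \<omega>)\<^sup>2) / 2)"
      proof (rule integral_mono)
        show "integrable M (\<lambda>\<omega>. \<bar>Y 0 \<omega> * Y k \<omega>\<bar>)" using YY by simp
        show "integrable M (\<lambda>\<omega>. ((Y 0 \<omega>)\<^sup>2 + (Y k \<omega>)\<^sup>2) / 2)" using Y2 by simp
        fix \<omega>
        have "0 \<le> (\<bar>Y 0 \<omega>\<bar> - \<bar>Y k \<omega>\<bar>)\<^sup>2" by simp
        then show "\<bar>Y 0 \<omega> * Y k \<omega>\<bar> \<le> ((Y 0 \<omega>)\<^sup>2 + (Y k \<omega>)\<^sup>2) / 2"
          by (simp add: power2_eq_square abs_mult algebra_simps)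
      qed
      finally show ?thesis .
    qed
    also have "\<dots> = (integral\<^sup>L M (\<lambda>\<omega>. Y 0 \<omega> * Y 0 \<omega>) + integral\<^sup>L M (\<lambda>\<omega>. Y k \<omega> * Y k \<omega>)) / 2"
      using Y2 by (simp add: power2_eq_square)
    also have "integral\<^sup>L M (\<lambda>\<omega>. Y k \<omega> * Y k \<omega>) = integral\<^sup>L M (\<lambda>\<omega>. Y 0 \<omega> * Y 0 \<omega>)"
      using stat[of k 0] by simp
    also have "(integral\<^sup>L M (\<lambda>\<omega>. Y 0 \<omega> * Y 0 \<omega>) + integral\<^sup>L M (\<lambda>\<omega>. Y 0 \<omega> * Y 0 \<omega>)) / 2 = autocov M X 0"
      by (simp add: autocov_def Y_def)
    finally show ?thesis .
  qed
  have quad: "integral\<^sup>L M (\<lambda>\<omega>. (\<Sum>a<N. u a * Y a \<omega>)\<^sup>2) = (\<Sum>a<N. \<Sum>b<N. u a * u b * integral\<^sup>L M (\<lambda>\<omega>. Y a \<omega> * Y b \<omega>))" for u :: "nat \<Rightarrow> real" and N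
  proof -
    have "integral\<^sup>L M (\<lambda>\<omega>. (\<Sum>a<N. u a * Y a \<omega>)\<^sup>2) = integral\<^sup>L M (\<lambda>\<omega>. \<Sum>a<N. \<Sum>b<N. u a * u b * (Y a \<omega> * Y b \<omega>))"
      by (intro Bochner_Integration.integral_cong refl) (simp add: power2_eq_square sum_product algebra_simps)
    also have "\<dots> = (\<Sum>a<N. \<Sum>b<N. u a * u b * integral\<^sup>L M (\<lambda>\<omega>. Y a \<omega> * Y b \<omega>))"
      using YY by (simp add: integrable_sum)
    finally show ?thesis .
  qed
  show "0 \<le> Re (\<Sum>a<N. \<Sum>b<N. complex_of_real (autocov M X (int a - int b)) * cis (real_of_int (int a - int b) * x))" for N x
  proof -
    have "Re (\<Sum>a<N. \<Sum>b<N. complex_of_real (autocov M X (int a - int b)) * cis (real_of_int (int a - int b) * x))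
      = (\<Sum>a<N. \<Sum>b<N. integral\<^sup>L M (\<lambda>\<omega>. Y a \<omega> * Y b \<omega>) * (cos (real a * x) * cos (real b * x) + sin (real a * x) * sin (real b * x)))"
      by (simp add: Re_sum cov cos_diff algebra_simps)
    also have "\<dots> = integral\<^sup>L M (\<lambda>\<omega>. (\<Sum>a<N. cos (real a * x) * Y a \<omega>)\<^sup>2) + integral\<^sup>L M (\<lambda>\<omega>. (\<Sum>a<N. sin (real a * x) * Y a \<omega>)\<^sup>2)"
      unfolding quad by (simp add: sum.distrib[symmetric] algebra_simps)
    also have "\<dots> \<ge> 0" by (intro add_nonneg_nonneg integral_nonneg) auto
    finally show ?thesis by simp
  qed
qed


definition U :: "complex \<Rightarrow> nat \<Rightarrow> nat \<Rightarrow> complex" where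
  "U z a b = (if b \<le> a then z ^ (a - b) else cnj z ^ (b - a))"

definition cw :: "complex \<Rightarrow> nat \<Rightarrow> real" where
  "cw z k = (if k = 0 then 1 else 1 - (cmod z)\<^sup>2)"

lemma cw_geom: "(\<Sum>k\<le>b. cw z k * ((cmod z)\<^sup>2) ^ (b - k)) = 1"
proof (induction b)
  case 0 then show ?case by (simp add: cw_def)
next
  case (Suc b)
  have "(\<Sum>k\<le>Suc b. cw z k * ((cmod z)\<^sup>2) ^ (Suc b - k)) =
      (\<Sum>k\<le>b. cw z k * ((cmod z)\<^sup>2) ^ (Suc b - k)) + cw z (Suc b)"
    by simp
  also have "(\<Sum>k\<le>b. cw z k * ((cmod z)\<^sup>2) ^ (Suc b - k)) = (cmod z)\<^sup>2 * (\<Sum>k\<le>b. cw z k * ((cmod z)\<^sup>2) ^ (b - k))"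
    unfolding sum_distrib_left
    by (intro sum.cong refl) (simp add: Suc_diff_le mult_ac)
  finally show ?case using Suc by (simp add: cw_def)
qed

lemma U_decomp_le:
  assumes "b \<le> a"
  shows "z ^ (a - b) = (\<Sum>k\<le>b. complex_of_real (cw z k) * z ^ (a - k) * cnj z ^ (b - k))"
proof -
  have "(\<Sum>k\<le>b. complex_of_real (cw z k) * z ^ (a - k) * cnj z ^ (b - k)) =
      (\<Sum>k\<le>b. z ^ (a - b) * complex_of_real (cw z k * ((cmod z)\<^sup>2) ^ (b - k)))"
  proof (intro sum.cong refl)
    fix k assume k: "k \<in> {..b}"
    then have "z ^ (a - k) = z ^ (a - b) * z ^ (b - k)" using assms by (simp add: power_add[symmetric])
    moreover have "z ^ (b - k) * cnj z ^ (b - k) = complex_of_real (((cmod z)\<^sup>2) ^ (b - k))"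
    proof -
      have zz: "z * cnj z = complex_of_real ((cmod z)\<^sup>2)" by (simp only: complex_norm_square)
      show ?thesis by (simp only: power_mult_distrib[symmetric] zz of_real_power)
    qed
    ultimately show "complex_of_real (cw z k) * z ^ (a - k) * cnj z ^ (b - k) = z ^ (a - b) * complex_of_real (cw z k * ((cmod z)\<^sup>2) ^ (b - k))"
      by (simp add: mult_ac)
  qed
  also have "\<dots> = z ^ (a - b) * complex_of_real (\<Sum>k\<le>b. cw z k * ((cmod z)\<^sup>2) ^ (b - k))"
    by (simp add: sum_distrib_left)
  also have "\<dots> = z ^ (a - b)" by (simp add: cw_geom)
  finally show ?thesis by simp
qed

lemma U_decomp: "U z a b = (\<Sum>k\<le>min a b. complex_of_real (cw z k) * z ^ (a - k) * cnj z ^ (b - k))"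
proof (cases "b \<le> a")
  case True
  then show ?thesis using U_decomp_le[OF True, of z] by (simp add: U_def min_def)
next
  case False
  then have ab: "a \<le> b" by simp
  have "cnj z ^ (b - a) = cnj (z ^ (b - a))" by simp
  also have "\<dots> = cnj (\<Sum>k\<le>a. complex_of_real (cw z k) * z ^ (b - k) * cnj z ^ (a - k))"
    using U_decomp_le[OF ab, of z] by simp
  also have "\<dots> = (\<Sum>k\<le>a. complex_of_real (cw z k) * z ^ (a - k) * cnj z ^ (b - k))"
    by (simp add: mult_ac)
  finally show ?thesis using False by (simp add: U_def min_def)
qed

lemma U_psd:
  assumes "cmod z \<le> 1"
  shows "0 \<le> Re (\<Sum>a<N. \<Sum>b<N. U z a b * (w a * cnj (w b)))"
proof -
  define V where "V k = (\<Sum>a<N. if k \<le> a then z ^ (a - k) * w a else 0)" for k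
  have cw_nn: "0 \<le> cw z k" for k
    using assms by (auto simp: cw_def power_le_one abs_le_square_iff[symmetric] intro: power_le_one)
  have "(\<Sum>a<N. \<Sum>b<N. U z a b * (w a * cnj (w b))) =
      (\<Sum>a<N. \<Sum>b<N. \<Sum>k<N. if k \<le> a \<and> k \<le> b then complex_of_real (cw z k) * (z ^ (a - k) * w a) * cnj (z ^ (b - k) * w b) else 0)"
  proof (intro sum.cong refl)
    fix a b assume "a \<in> {..<N}" "b \<in> {..<N}"
    then have "{..min a b} = {k\<in>{..<N}. k \<le> a \<and> k \<le> b}" by auto
    then have "U z a b = (\<Sum>k\<in>{k\<in>{..<N}. k \<le> a \<and> k \<le> b}. complex_of_real (cw z k) * z ^ (a - k) * cnj z ^ (b - k))"
      by (simp add: U_decomp)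
    also have "\<dots> = (\<Sum>k<N. if k \<le> a \<and> k \<le> b then complex_of_real (cw z k) * z ^ (a - k) * cnj z ^ (b - k) else 0)"
      by (rule sum.inter_filter) simp
    finally show "U z a b * (w a * cnj (w b)) = (\<Sum>k<N. if k \<le> a \<and> k \<le> b then complex_of_real (cw z k) * (z ^ (a - k) * w a) * cnj (z ^ (b - k) * w b) else 0)"
    proof -
      assume eq: "U z a b = (\<Sum>k<N. if k \<le> a \<and> k \<le> b then complex_of_real (cw z k) * z ^ (a - k) * cnj z ^ (b - k) else 0)"
      show ?thesis unfolding eq sum_distrib_right by (intro sum.cong refl) (auto simp: mult_ac)
    qed
  qed
  also have "\<dots> = (\<Sum>k<N. complex_of_real (cw z k) * (V k * cnj (V k)))"
  proof -
    have "(\<Sum>a<N. \<Sum>b<N. \<Sum>k<N. if k \<le> a \<and> k \<le> b then complex_of_real (cw z k) * (z ^ (a - k) * w a) * cnj (z ^ (b - k) * w b) else 0)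
        = (\<Sum>k<N. \<Sum>a<N. \<Sum>b<N. if k \<le> a \<and> k \<le> b then complex_of_real (cw z k) * (z ^ (a - k) * w a) * cnj (z ^ (b - k) * w b) else 0)"
    proof -
      define F where "F a b k = (if k \<le> a \<and> k \<le> b then complex_of_real (cw z k) * (z ^ (a - k) * w a) * cnj (z ^ (b - k) * w b) else 0)" for a b k
      have "(\<Sum>a<N. \<Sum>b<N. \<Sum>k<N. F a b k) = (\<Sum>a<N. \<Sum>k<N. \<Sum>b<N. F a b k)"
        by (rule sum.cong[OF refl], rule sum.swap)
      also have "\<dots> = (\<Sum>k<N. \<Sum>a<N. \<Sum>b<N. F a b k)" by (rule sum.swap)
      finally show ?thesis unfolding F_def .
    qed
    also have "\<dots> = (\<Sum>k<N. complex_of_real (cw z k) * (V k * cnj (V k)))"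
    proof (intro sum.cong refl)
      fix k
      define A where "A a = (if k \<le> a then z ^ (a - k) * w a else 0)" for a
      have VA: "V k = (\<Sum>a<N. A a)" by (simp add: V_def A_def)
      have "complex_of_real (cw z k) * (V k * cnj (V k)) = (\<Sum>a<N. \<Sum>b<N. complex_of_real (cw z k) * (A a * cnj (A b)))"
      proof -
        have "V k * cnj (V k) = (\<Sum>a<N. \<Sum>b<N. A a * cnj (A b))"
          unfolding VA cnj_sum by (rule sum_product)
        then show ?thesis by (simp add: sum_distrib_left)
      qed
      also have "\<dots> = (\<Sum>a<N. \<Sum>b<N. if k \<le> a \<and> k \<le> b then complex_of_real (cw z k) * (z ^ (a - k) * w a) * cnj (z ^ (b - k) * w b) else 0)"
        by (intro sum.cong refl) (simp add: A_def mult_ac)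
      finally show "(\<Sum>a<N. \<Sum>b<N. if k \<le> a \<and> k \<le> b then complex_of_real (cw z k) * (z ^ (a - k) * w a) * cnj (z ^ (b - k) * w b) else 0) = complex_of_real (cw z k) * (V k * cnj (V k))"
        by simp
    qed
    finally show ?thesis .
  qed
  also have "Re \<dots> = (\<Sum>k<N. cw z k * (cmod (V k))\<^sup>2)"
    by (simp add: Re_sum complex_norm_square[symmetric] del: of_real_power)
  also have "\<dots> \<ge> 0" by (intro sum_nonneg mult_nonneg_nonneg cw_nn) auto
  finally show ?thesis by simp
qed


lemma char_bound: "cmod (char_fun_S S \<theta>) \<le> 1"
proof -
  have s: "summable (\<lambda>k. cmod (complex_of_real (pmf S k) * cis (real k * \<theta>)))"
    by (rule pmf_summable_norm) simp
  have "cmod (char_fun_S S \<theta>) \<le> (\<Sum>k. cmod (complex_of_real (pmf S k) * cis (real k * \<theta>)))"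
    unfolding char_fun_S_def by (rule summable_norm[OF s])
  also have "\<dots> = (\<Sum>k. pmf S k *\<^sub>R (1::real))" by (simp add: norm_mult)
  also have "\<dots> = measure_pmf.expectation S (\<lambda>_. 1::real)"
    by (rule pmf_expect_nat(1)[where B=1, symmetric]) simp
  also have "\<dots> = 1" by simp
  finally show ?thesis .
qed

lemma char_borel[measurable]: "char_fun_S S \<in> borel_measurable borel"
proof -
  have "char_fun_S S = (\<lambda>\<theta>. lim (\<lambda>n. \<Sum>k<n. complex_of_real (pmf S k) * cis (real k * \<theta>)))"
    unfolding char_fun_S_def by (simp add: suminf_eq_lim fun_eq_iff)
  also have "\<dots> \<in> borel_measurable borel"
  proof (rule borel_measurable_lim_metric)
    fix n
    show "(\<lambda>\<theta>. \<Sum>k<n. complex_of_real (pmf S k) * cis (real k * \<theta>)) \<in> borel_measurable borel"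
      by (rule borel_measurable_continuous_onI) (auto intro!: continuous_intros)
  qed
  finally show ?thesis .
qed

lemma U_cnj: "U (cnj z) a b = cnj (U z a b)"
  by (simp add: U_def)

lemma G_nonneg:
  assumes "cmod z \<le> 1"
  shows "0 \<le> (\<Sum>a<N. \<Sum>b<N. Re (z ^ nat \<bar>int a - int b\<bar>) * cos (real_of_int (int a - int b) * x))"
proof -
  define w where "w a = cis (real a * x)" for a
  have wc: "w a * cnj (w b) = cis (real_of_int (int a - int b) * x)" for a b
    by (simp add: w_def cis_cnj cis_mult algebra_simps)
  have trm: "Re (U z a b * (w a * cnj (w b))) + Re (U (cnj z) a b * (w a * cnj (w b))) =
      2 * (Re (z ^ nat \<bar>int a - int b\<bar>) * cos (real_of_int (int a - int b) * x))" for a b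
  proof -
    have ReU: "Re (U z a b) = Re (z ^ nat \<bar>int a - int b\<bar>)"
    proof (cases "b \<le> a")
      case True
      then have "nat \<bar>int a - int b\<bar> = a - b" by simp
      then show ?thesis using True by (simp add: U_def)
    next
      case False
      then have "nat \<bar>int a - int b\<bar> = b - a" by simp
      moreover have "Re (cnj z ^ (b - a)) = Re (z ^ (b - a))"
        by (metis complex_cnj_power cnj.sel(1))
      ultimately show ?thesis using False by (simp add: U_def)
    qed
    show ?thesis unfolding U_cnj wc
      by (simp add: ReU[symmetric] cos_of_real algebra_simps)
  qed
  have "2 * (\<Sum>a<N. \<Sum>b<N. Re (z ^ nat \<bar>int a - int b\<bar>) * cos (real_of_int (int a - int b) * x)) =
      Re (\<Sum>a<N. \<Sum>b<N. U z a b * (w a * cnj (w b))) + Re (\<Sum>a<N. \<Sum>b<N. U (cnj z) a b * (w a * cnj (w b)))"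
  proof -
    have "Re (\<Sum>a<N. \<Sum>b<N. U z a b * (w a * cnj (w b))) + Re (\<Sum>a<N. \<Sum>b<N. U (cnj z) a b * (w a * cnj (w b)))
       = (\<Sum>a<N. \<Sum>b<N. Re (U z a b * (w a * cnj (w b))) + Re (U (cnj z) a b * (w a * cnj (w b))))"
      by (simp only: Re_sum sum.distrib)
    also have "\<dots> = (\<Sum>a<N. \<Sum>b<N. 2 * (Re (z ^ nat \<bar>int a - int b\<bar>) * cos (real_of_int (int a - int b) * x)))"
      by (simp only: trm)
    finally show ?thesis by (simp only: sum_distrib_left)
  qed
  also have "\<dots> \<ge> 0"
    using U_psd[OF assms, where N=N and w=w] U_psd[where z="cnj z" and N=N and w=w] assms by simp
  finally show ?thesis by simp
qed

lemma Y_PD: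
  fixes \<sigma> :: "int \<Rightarrow> real" and fX :: "real \<Rightarrow> real"
  assumes sd: "spectral_density \<sigma> fX" and bnd: "\<And>h. \<bar>\<sigma> h\<bar> \<le> B"
  shows "0 \<le> Re (\<Sum>a<N. \<Sum>b<N. complex_of_real (sampled_cov \<sigma> S (int a - int b)) * cis (real_of_int (int a - int b) * x))"
proof -
  let ?\<Phi> = "char_fun_S S"
  have fX_int: "set_integrable lborel {-pi..pi} fX" and fX_nn: "\<And>x. x \<in> {-pi..pi} \<Longrightarrow> 0 \<le> fX x"
    using sd by (auto simp: spectral_density_def)
  have intfX: "integrable lborel (\<lambda>\<theta>. indicator {-pi..pi} \<theta> *\<^sub>R fX \<theta>)"
    using fX_int unfolding set_integrable_def .
  have fXm[measurable]: "(\<lambda>\<theta>. indicator {-pi..pi} \<theta> *\<^sub>R fX \<theta>) \<in> borel_measurable borel"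
    using intfX by auto
  define g where "g n \<theta> = indicator {-pi..pi} \<theta> *\<^sub>R (?\<Phi> \<theta> ^ n * complex_of_real (fX \<theta>))" for n \<theta>
  have g_alt: "g n \<theta> = ?\<Phi> \<theta> ^ n * complex_of_real (indicator {-pi..pi} \<theta> *\<^sub>R fX \<theta>)" for n \<theta>
    by (simp add: g_def split: split_indicator)
  have g_int: "integrable lborel (g n)" for n
    unfolding g_alt
  proof (rule Bochner_Integration.integrable_bound[where f="\<lambda>\<theta>. indicator {-pi..pi} \<theta> *\<^sub>R fX \<theta>"])
    show "(\<lambda>\<theta>. ?\<Phi> \<theta> ^ n * complex_of_real (indicator {-pi..pi} \<theta> *\<^sub>R fX \<theta>)) \<in> borel_measurable lborel"
      by measurable
    show "AE \<theta> in lborel. norm (?\<Phi> \<theta> ^ n * complex_of_real (indicator {-pi..pi} \<theta> *\<^sub>R fX \<theta>)) \<le> norm (indicator {-pi..pi} \<theta> *\<^sub>R fX \<theta>)"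
    proof (intro AE_I2)
      fix \<theta>
      have "cmod (?\<Phi> \<theta> ^ n) \<le> 1" by (simp add: norm_power power_le_one char_bound)
      then show "norm (?\<Phi> \<theta> ^ n * complex_of_real (indicator {-pi..pi} \<theta> *\<^sub>R fX \<theta>)) \<le> norm (indicator {-pi..pi} \<theta> *\<^sub>R fX \<theta>)"
        by (simp add: norm_mult mult_left_le_one_le split: split_indicator)
    qed
  qed (rule intfX)
  have scr: "sampled_cov \<sigma> S j = integral\<^sup>L lborel (\<lambda>\<theta>. indicator {-pi..pi} \<theta> * (Re (?\<Phi> \<theta> ^ nat \<bar>j\<bar>) * fX \<theta>))" for j
  proof -
    have "complex_of_real (sampled_cov \<sigma> S j) = integral\<^sup>L lborel (g (nat \<bar>j\<bar>))"
      using sampled_spec[OF sd bnd, of S j] unfolding set_lebesgue_integral_def g_def by simp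
    then have "sampled_cov \<sigma> S j = Re (integral\<^sup>L lborel (g (nat \<bar>j\<bar>)))"
      by (metis Re_complex_of_real)
    also have "\<dots> = integral\<^sup>L lborel (\<lambda>\<theta>. Re (g (nat \<bar>j\<bar>) \<theta>))"
      by (rule integral_Re[symmetric]) (rule g_int)
    also have "\<dots> = integral\<^sup>L lborel (\<lambda>\<theta>. indicator {-pi..pi} \<theta> * (Re (?\<Phi> \<theta> ^ nat \<bar>j\<bar>) * fX \<theta>))"
      by (intro Bochner_Integration.integral_cong refl) (simp add: g_def split: split_indicator)
    finally show ?thesis .
  qed
  have rint: "integrable lborel (\<lambda>\<theta>. indicator {-pi..pi} \<theta> * (Re (?\<Phi> \<theta> ^ n) * fX \<theta>))" for n
  proof -
    have "integrable lborel (\<lambda>\<theta>. Re (g n \<theta>))" using g_int by auto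
    moreover have "(\<lambda>\<theta>. Re (g n \<theta>)) = (\<lambda>\<theta>. indicator {-pi..pi} \<theta> * (Re (?\<Phi> \<theta> ^ n) * fX \<theta>))"
      by (auto simp: g_def fun_eq_iff split: split_indicator)
    ultimately show ?thesis by simp
  qed
  define G where "G \<theta> = (\<Sum>a<N. \<Sum>b<N. Re (?\<Phi> \<theta> ^ nat \<bar>int a - int b\<bar>) * cos (real_of_int (int a - int b) * x))" for \<theta>
  have "Re (\<Sum>a<N. \<Sum>b<N. complex_of_real (sampled_cov \<sigma> S (int a - int b)) * cis (real_of_int (int a - int b) * x))
      = (\<Sum>a<N. \<Sum>b<N. sampled_cov \<sigma> S (int a - int b) * cos (real_of_int (int a - int b) * x))"
    by (simp add: Re_sum)
  also have "\<dots> = (\<Sum>a<N. \<Sum>b<N. integral\<^sup>L lborel (\<lambda>\<theta>. indicator {-pi..pi} \<theta> * (Re (?\<Phi> \<theta> ^ nat \<bar>int a - int b\<bar>) * fX \<theta>) * cos (real_of_int (int a - int b) * x)))"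
    by (simp add: scr)
  also have "\<dots> = integral\<^sup>L lborel (\<lambda>\<theta>. \<Sum>a<N. \<Sum>b<N. indicator {-pi..pi} \<theta> * (Re (?\<Phi> \<theta> ^ nat \<bar>int a - int b\<bar>) * fX \<theta>) * cos (real_of_int (int a - int b) * x))"
  proof -
    define T where "T a b \<theta> = indicator {-pi..pi} \<theta> * (Re (?\<Phi> \<theta> ^ nat \<bar>int a - int b\<bar>) * fX \<theta>) * cos (real_of_int (int a - int b) * x)" for a b :: nat and \<theta>
    have Tint: "integrable lborel (T a b)" for a b
      unfolding T_def using rint[of "nat \<bar>int a - int b\<bar>"] by simp
    have "integral\<^sup>L lborel (\<lambda>\<theta>. \<Sum>a<N. \<Sum>b<N. T a b \<theta>) = (\<Sum>a<N. integral\<^sup>L lborel (\<lambda>\<theta>. \<Sum>b<N. T a b \<theta>))"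
      by (rule Bochner_Integration.integral_sum) (rule Bochner_Integration.integrable_sum, rule Tint)
    also have "\<dots> = (\<Sum>a<N. \<Sum>b<N. integral\<^sup>L lborel (T a b))"
      by (intro sum.cong refl Bochner_Integration.integral_sum Tint)
    finally show ?thesis unfolding T_def by simp
  qed
  also have "\<dots> = integral\<^sup>L lborel (\<lambda>\<theta>. indicator {-pi..pi} \<theta> * fX \<theta> * G \<theta>)"
    by (intro Bochner_Integration.integral_cong refl) (simp add: G_def sum_distrib_left mult_ac)
  also have "\<dots> \<ge> 0"
  proof (intro Bochner_Integration.integral_nonneg)
    fix \<theta>
    show "0 \<le> indicator {-pi..pi} \<theta> * fX \<theta> * G \<theta>"
    proof (cases "\<theta> \<in> {-pi..pi}")
      case True
      have "0 \<le> G \<theta>" unfolding G_def by (rule G_nonneg) (rule char_bound)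
      then show ?thesis using True fX_nn[OF True] by simp
    qed simp
  qed
  finally show ?thesis .
qed


lemma make_nonneg:
  fixes c :: "int \<Rightarrow> real" and f :: "real \<Rightarrow> real"
  assumes fb[measurable]: "f \<in> borel_measurable borel" and fi: "set_integrable lborel {-pi..pi} f"
    and pos: "AE x in lborel. x \<in> {-pi..pi} \<longrightarrow> 0 \<le> f x"
    and coef: "\<And>h. complex_of_real (c h) = (\<integral>x\<in>{-pi..pi}. cis (real_of_int h * x) * complex_of_real (f x) \<partial>lborel)"
  shows "spectral_density c (\<lambda>x. max (f x) 0)"
    and "AE x in lborel. x \<in> {-pi..pi} \<longrightarrow> max (f x) 0 = f x"
proof -
  show ae: "AE x in lborel. x \<in> {-pi..pi} \<longrightarrow> max (f x) 0 = f x"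
    using pos by eventually_elim auto
  have "set_integrable lborel {-pi..pi} (\<lambda>x. max (f x) 0)"
  proof -
    have "AE x in lborel. x \<in> {-pi..pi} \<longrightarrow> f x = max (f x) 0" using ae by eventually_elim auto
    then show ?thesis
      using set_integrable_cong_AE[of f lborel "\<lambda>x. max (f x) 0" "{-pi..pi}"] fi by auto
  qed
  moreover have "(\<integral>x\<in>{-pi..pi}. cis (real_of_int h * x) * complex_of_real (f x) \<partial>lborel) =
      (\<integral>x\<in>{-pi..pi}. cis (real_of_int h * x) * complex_of_real (max (f x) 0) \<partial>lborel)" for h
    by (rule set_lebesgue_integral_cong_AE) (use ae in \<open>auto elim!: eventually_mono\<close>)
  ultimately show "spectral_density c (\<lambda>x. max (f x) 0)"
    unfolding spectral_density_def using coef by auto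
qed

lemma sq_from_powr:
  fixes c :: "int \<Rightarrow> real"
  assumes bnd: "\<And>h. \<bar>c h\<bar> \<le> B" and p: "1 \<le> p" "p \<le> 2"
    and sum: "(\<lambda>h. \<bar>c h\<bar> powr p) summable_on UNIV"
  shows "summable (\<lambda>n. (c (int n))\<^sup>2)"
proof (rule summable_comparison_test')
  show "summable (\<lambda>n. B powr (2 - p) * \<bar>c (int n)\<bar> powr p)"
    by (rule summable_mult) (rule nat_summable_from_int(2)[OF sum])
  fix n
  show "norm ((c (int n))\<^sup>2) \<le> B powr (2 - p) * \<bar>c (int n)\<bar> powr p"
  proof (cases "c (int n) = 0")
    case True then show ?thesis by simp
  next
    case False
    let ?x = "\<bar>c (int n)\<bar>"
    have x: "?x > 0" using False by simp
    have "(c (int n))\<^sup>2 = ?x powr 2" using x by (simp add: powr_numeral)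
    also have "\<dots> = ?x powr (2 - p) * ?x powr p" by (simp add: powr_add[symmetric])
    also have "\<dots> \<le> B powr (2 - p) * ?x powr p"
      using x bnd[of "int n"] p by (intro mult_right_mono powr_mono2) auto
    finally show ?thesis by simp
  qed
qed

lemma sampled_bnd:
  fixes \<sigma> :: "int \<Rightarrow> real"
  assumes bnd: "\<And>h. \<bar>\<sigma> h\<bar> \<le> B"
  shows "\<bar>sampled_cov \<sigma> S h\<bar> \<le> B"
proof (cases "h = 0")
  case True then show ?thesis using bnd by (simp add: sampled_cov_def)
next
  case False
  let ?p = "walk_law S (nat \<bar>h\<bar>)"
  have "\<bar>measure_pmf.expectation ?p (\<lambda>k. \<sigma> (int k))\<bar> \<le> measure_pmf.expectation ?p (\<lambda>k. \<bar>\<sigma> (int k)\<bar>)"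
    by (rule integral_abs_bound)
  also have "\<dots> \<le> measure_pmf.expectation ?p (\<lambda>k. B)"
    by (rule integral_mono) (use bnd in \<open>auto intro: measure_pmf.integrable_const_bound[where B=B]\<close>)
  also have "\<dots> = B" by simp
  finally show ?thesis using False by (simp add: sampled_cov_def)
qed

lemma fY_partial_eq:
  fixes \<sigma> :: "int \<Rightarrow> real" and fX :: "real \<Rightarrow> real"
  assumes sd: "spectral_density \<sigma> fX" and bnd: "\<And>h. \<bar>\<sigma> h\<bar> \<le> B"
  shows "fY_partial S fX N t = P (\<lambda>h. sampled_cov \<sigma> S h / (2*pi)) N t"
proof -
  let ?c = "sampled_cov \<sigma> S"
  have ev: "?c (-h) = ?c h" for h by (simp add: sampled_cov_def)
  have "fY_partial S fX N t = complex_of_real (1 / (2 * pi)) * (\<Sum>j\<in>{-int N..int N}. cis (- real_of_int j * t) * complex_of_real (?c j))"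
    unfolding fY_partial_def using sampled_spec[OF sd bnd, of S] by simp
  also have "\<dots> = (\<Sum>j\<in>{-int N..int N}. complex_of_real (?c j / (2*pi)) * cis (- real_of_int j * t))"
    by (simp add: sum_distrib_left mult_ac)
  also have "\<dots> = P (\<lambda>h. ?c h / (2*pi)) N t"
    unfolding P_def
    by (rule sum.reindex_bij_witness[where i=uminus and j=uminus]) (auto simp: ev)
  finally show ?thesis .
qed

theorem proposition2p1:
  fixes M :: "'a measure" and X :: "nat \<Rightarrow> 'a \<Rightarrow> real" and S :: "nat pmf" and p :: real
  assumes "second_order_stationary M X"
    and "pmf S 0 = 0"
    and "p \<ge> 1"
    and "(\<lambda>h::int. \<bar>autocov M X h\<bar> powr p) summable_on UNIV"
  shows "(\<lambda>h::int. \<bar>sampled_cov (autocov M X) S h\<bar> powr p) summable_on UNIV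
    \<and> (p \<le> 2 \<longrightarrow>
         (\<exists>fX fY. spectral_density (autocov M X) fX
            \<and> spectral_density (sampled_cov (autocov M X) S) fY
            \<and> ((\<lambda>N. \<integral>\<^sup>+ x\<in>{-pi..pi}. ennreal ((cmod (fY_partial S fX N x - complex_of_real (fY x)))\<^sup>2) \<partial>lborel)
                 \<longlonglongrightarrow> 0)))"
proof -
  note sos = assms(1) and S0 = assms(2) and p1 = assms(3) and sumX = assms(4)
  define \<sigma> where "\<sigma> = autocov M X"
  define B where "B = \<sigma> 0"
  have bnd: "\<bar>\<sigma> h\<bar> \<le> B" for h unfolding \<sigma>_def B_def by (rule sos_facts(1)[OF sos])
  have PDX: "0 \<le> Re (\<Sum>a<N. \<Sum>b<N. complex_of_real (\<sigma> (int a - int b)) * cis (real_of_int (int a - int b) * x))" for N x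
    unfolding \<sigma>_def by (rule sos_facts(2)[OF sos])
  have evX: "\<sigma> (-h) = \<sigma> h" for h by (simp add: \<sigma>_def autocov_def)
  have partI: "(\<lambda>h::int. \<bar>sampled_cov \<sigma> S h\<bar> powr p) summable_on UNIV"
    by (rule part_i[OF bnd S0 p1 sumX[folded \<sigma>_def]])
  have partII: "\<exists>fX fY. spectral_density \<sigma> fX
            \<and> spectral_density (sampled_cov \<sigma> S) fY
            \<and> ((\<lambda>N. \<integral>\<^sup>+ x\<in>{-pi..pi}. ennreal ((cmod (fY_partial S fX N x - complex_of_real (fY x)))\<^sup>2) \<partial>lborel)
                 \<longlonglongrightarrow> 0)" if p2: "p \<le> 2"
  proof -
    have sqX: "summable (\<lambda>n. (\<sigma> (int n))\<^sup>2)"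
      by (rule sq_from_powr[OF bnd p1 p2 sumX[folded \<sigma>_def]])
    obtain fX0 where fX0b: "fX0 \<in> borel_measurable borel" and fbX: "FB \<sigma> fX0"
      and fX0i: "set_integrable lborel {-pi..pi} fX0"
      and coefX: "\<And>h. complex_of_real (\<sigma> h) = (\<integral>x\<in>{-pi..pi}. cis (real_of_int h * x) * complex_of_real (fX0 x) \<partial>lborel)"
      using RF[OF evX sqX] by blast
    have posX: "AE x in lborel. x \<in> {-pi..pi} \<longrightarrow> 0 \<le> fX0 x"
      by (rule RF_pos[OF evX sqX fbX fX0b PDX])
    define fX where "fX x = max (fX0 x) 0" for x
    have sdX: "spectral_density \<sigma> fX"
      unfolding fX_def by (rule make_nonneg(1)[OF fX0b fX0i posX coefX])
    let ?c = "sampled_cov \<sigma> S"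
    have bndY: "\<bar>?c h\<bar> \<le> B" for h by (rule sampled_bnd[OF bnd])
    have evY: "?c (-h) = ?c h" for h by (simp add: sampled_cov_def)
    have sqY: "summable (\<lambda>n. (?c (int n))\<^sup>2)"
      by (rule sq_from_powr[OF bndY p1 p2 partI])
    have PDY: "0 \<le> Re (\<Sum>a<N. \<Sum>b<N. complex_of_real (?c (int a - int b)) * cis (real_of_int (int a - int b) * x))" for N x
      by (rule Y_PD[OF sdX bnd])
    obtain fY0 where fY0b: "fY0 \<in> borel_measurable borel" and fbY: "FB ?c fY0"
      and fY0i: "set_integrable lborel {-pi..pi} fY0"
      and coefY: "\<And>h. complex_of_real (?c h) = (\<integral>x\<in>{-pi..pi}. cis (real_of_int h * x) * complex_of_real (fY0 x) \<partial>lborel)"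
      and convY: "(\<lambda>N. \<integral>\<^sup>+x\<in>{-pi..pi}. ennreal ((cmod (P (\<lambda>h. ?c h / (2*pi)) N x - complex_of_real (fY0 x)))\<^sup>2) \<partial>lborel) \<longlonglongrightarrow> 0"
      using RF[OF evY sqY] by blast
    have posY: "AE x in lborel. x \<in> {-pi..pi} \<longrightarrow> 0 \<le> fY0 x"
      by (rule RF_pos[OF evY sqY fbY fY0b PDY])
    define fY where "fY x = max (fY0 x) 0" for x
    have sdY: "spectral_density ?c fY"
      unfolding fY_def by (rule make_nonneg(1)[OF fY0b fY0i posY coefY])
    have aeY: "AE x in lborel. x \<in> {-pi..pi} \<longrightarrow> fY x = fY0 x"
      unfolding fY_def by (rule make_nonneg(2)[OF fY0b fY0i posY coefY])
    have "(\<lambda>N. \<integral>\<^sup>+ x\<in>{-pi..pi}. ennreal ((cmod (fY_partial S fX N x - complex_of_real (fY x)))\<^sup>2) \<partial>lborel) =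
        (\<lambda>N. \<integral>\<^sup>+x\<in>{-pi..pi}. ennreal ((cmod (P (\<lambda>h. ?c h / (2*pi)) N x - complex_of_real (fY0 x)))\<^sup>2) \<partial>lborel)"
    proof (rule ext, rule nn_integral_cong_AE)
      fix N
      show "AE x in lborel. ennreal ((cmod (fY_partial S fX N x - complex_of_real (fY x)))\<^sup>2) * indicator {-pi..pi} x =
          ennreal ((cmod (P (\<lambda>h. ?c h / (2*pi)) N x - complex_of_real (fY0 x)))\<^sup>2) * indicator {-pi..pi} x"
        using aeY by eventually_elim (auto simp: fY_partial_eq[OF sdX bnd] split: split_indicator)
    qed
    with convY have "(\<lambda>N. \<integral>\<^sup>+ x\<in>{-pi..pi}. ennreal ((cmod (fY_partial S fX N x - complex_of_real (fY x)))\<^sup>2) \<partial>lborel) \<longlonglongrightarrow> 0"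
      by simp
    then show ?thesis using sdX sdY by blast
  qed
  show ?thesis using partI partII unfolding \<sigma>_def by blast
qed


end
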